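(* Let $P_1,P_2,Q_1,Q_2\in\mathbb{C}[x]$ with $P_1$ nonconstant and $P_1Q_1Q_2=P_2$, and let $t\in\mathbb{C}\setminus\{0\}$. The assignment $u\mapsto Q_1(z-\tfrac12)u$, $v\mapsto Q_2(z+\tfrac12)v$, $z\mapsto z$ defines an algebra homomorphism $\varphi=\varphi_{Q_1,Q_2}:\mathcal{A}_{P_2}\to\mathcal{A}_{P_1}$ commuting with $g_t$, and pullback $T\mapsto T\circ\varphi$ is an injective linear map $\mathcal{C}_{P_1,t}\hookrightarrow\mathcal{C}_{P_2,t}$ satisfying $F_{T\circ\varphi}=F_T$. Moreover, $\mathcal{D}_{P_1,t}$ is exactly the preimage of $\mathcal{D}_{P_2,t}$ under this map, i.e. $T\circ\varphi$ is degenerate if and only if $T$ is.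
   Context: For a nonconstant polynomial $P\in\mathbb{C}[x]$, $\mathcal{A}_P$ denotes the associative unital $\mathbb{C}$-algebra generated by $u,v,z$ subject to $zu-uz=u$, $zv-vz=-v$, $uv=P(z-\tfrac12)$, $vu=P(z+\tfrac12)$. For $t\in\mathbb{C}\setminus\{0\}$, $g_t$ is the automorphism with $g_t(u)=t^{-1}u$, $g_t(v)=tv$, $g_t(z)=z$. A twisted trace on $\mathcal{A}_P$ is a linear $T:\mathcal{A}_P\to\mathbb{C}$ with $T(ab)=T(g_t(b)a)$ for all $a,b$; $\mathcal{C}_{P,t}$ is the space of these. $T$ is degenerate if there is $0\neq a\in\mathcal{A}_P$ with $T(ab)=0$ for all $b$; $\mathcal{D}_{P,t}$ is the set of degenerate twisted traces. The formal Stieltjes transform is $F_T(x)=\sum_{n\ge0}T(z^n)x^{-n-1}$. *)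

theory Defs
  imports "HOL-Library.Function_Algebras" "HOL-Computational_Algebra.Polynomial" "HOL-Computational_Algebra.Formal_Power_Series"
begin

text \<open>Model: A_P is the quotient of the free associative algebra C<u,v,z> by the two-sided
ideal generated by the four defining relations.  Elements of the free algebra are
finitely supported functions from words (lists of generators) to complex numbers.\<close>

datatype gen = U | V | Z

type_synonym felem = "gen list \<Rightarrow> complex"

definition FA :: "felem set" where
  "FA = {f. finite {w. f w \<noteq> 0}}"

definition fmul :: "felem \<Rightarrow> felem \<Rightarrow> felem" where
  "fmul a b = (\<lambda>w. \<Sum>i\<le>length w. a (take i w) * b (drop i w))"

definition fsingle :: "gen list \<Rightarrow> felem" where
  "fsingle w = (\<lambda>w'. if w' = w then 1 else 0)"

definition fone :: felem where
  "fone = fsingle []"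

definition fscale :: "complex \<Rightarrow> felem \<Rightarrow> felem" where
  "fscale c f = (\<lambda>w. c * f w)"

definition polyZ :: "complex poly \<Rightarrow> felem" where
  "polyZ p = (\<lambda>w. if w = replicate (length w) Z then coeff p (length w) else 0)"

definition pshift :: "complex poly \<Rightarrow> complex \<Rightarrow> complex poly" where
  "pshift p c = pcompose p [:c, 1:]"

definition rels :: "complex poly \<Rightarrow> felem set" where
  "rels P = {
     fmul (fsingle [Z]) (fsingle [U]) - fmul (fsingle [U]) (fsingle [Z]) - fsingle [U],
     fmul (fsingle [Z]) (fsingle [V]) - fmul (fsingle [V]) (fsingle [Z]) + fsingle [V],
     fmul (fsingle [U]) (fsingle [V]) - polyZ (pshift P (-1/2)),
     fmul (fsingle [V]) (fsingle [U]) - polyZ (pshift P (1/2))}"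

inductive_set rel_ideal :: "complex poly \<Rightarrow> felem set" for P where
  gen: "r \<in> rels P \<Longrightarrow> a \<in> FA \<Longrightarrow> b \<in> FA \<Longrightarrow> fmul (fmul a r) b \<in> rel_ideal P"
| zero: "(\<lambda>_. 0) \<in> rel_ideal P"
| add: "x \<in> rel_ideal P \<Longrightarrow> y \<in> rel_ideal P \<Longrightarrow> x + y \<in> rel_ideal P"
| scale: "x \<in> rel_ideal P \<Longrightarrow> fscale c x \<in> rel_ideal P"

text \<open>The automorphism g_t (lifted to the free algebra): u \<mapsto> t^-1 u, v \<mapsto> t v, z \<mapsto> z.\<close>
definition gt :: "complex \<Rightarrow> felem \<Rightarrow> felem" where
  "gt t f = (\<lambda>w. t powi (int (count_list w V) - int (count_list w U)) * f w)"

text \<open>A linear functional on the free algebra is given by its values tau on words.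
  A linear functional T on A_P is the same as such a tau whose functional vanishes
  on the ideal.\<close>
definition ev :: "(gen list \<Rightarrow> complex) \<Rightarrow> felem \<Rightarrow> complex" where
  "ev \<tau> f = (\<Sum>w\<in>{w. f w \<noteq> 0}. f w * \<tau> w)"

definition twisted_trace :: "complex poly \<Rightarrow> complex \<Rightarrow> (gen list \<Rightarrow> complex) \<Rightarrow> bool" where
  "twisted_trace P t \<tau> \<longleftrightarrow>
     (\<forall>x\<in>rel_ideal P. ev \<tau> x = 0) \<and>
     (\<forall>a\<in>FA. \<forall>b\<in>FA. ev \<tau> (fmul a b) = ev \<tau> (fmul (gt t b) a))"

definition degenerate :: "complex poly \<Rightarrow> (gen list \<Rightarrow> complex) \<Rightarrow> bool" where
  "degenerate P \<tau> \<longleftrightarrow>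
     (\<exists>a\<in>FA. a \<notin> rel_ideal P \<and> (\<forall>b\<in>FA. ev \<tau> (fmul a b) = 0))"

fun phig :: "complex poly \<Rightarrow> complex poly \<Rightarrow> gen \<Rightarrow> felem" where
  "phig Q1 Q2 U = fmul (polyZ (pshift Q1 (-1/2))) (fsingle [U])"
| "phig Q1 Q2 V = fmul (polyZ (pshift Q2 (1/2))) (fsingle [V])"
| "phig Q1 Q2 Z = fsingle [Z]"

definition phiw :: "complex poly \<Rightarrow> complex poly \<Rightarrow> gen list \<Rightarrow> felem" where
  "phiw Q1 Q2 w = foldr (\<lambda>g acc. fmul (phig Q1 Q2 g) acc) w fone"

definition phi :: "complex poly \<Rightarrow> complex poly \<Rightarrow> felem \<Rightarrow> felem" where
  "phi Q1 Q2 f = (\<lambda>w'. \<Sum>w\<in>{w. f w \<noteq> 0}. f w * phiw Q1 Q2 w w')"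

definition pull :: "complex poly \<Rightarrow> complex poly \<Rightarrow> (gen list \<Rightarrow> complex) \<Rightarrow> (gen list \<Rightarrow> complex)" where
  "pull Q1 Q2 \<tau> = (\<lambda>w. ev \<tau> (phiw Q1 Q2 w))"

text \<open>Formal Stieltjes transform: the n-th coefficient is T(z^n), i.e. the coefficient of x^(-n-1).\<close>
definition stieltjes :: "(gen list \<Rightarrow> complex) \<Rightarrow> complex fps" where
  "stieltjes \<tau> = Abs_fps (\<lambda>n. \<tau> (replicate n Z))"

end

theory Submission
  imports Defs
begin

definition supp :: "felem \<Rightarrow> gen list set" where "supp a = {w. a w \<noteq> 0}"

lemma FA_iff: "a \<in> FA \<longleftrightarrow> finite (supp a)" by (simp add: FA_def supp_def)

lemma fmul_splits:
  "fmul a b w = (\<Sum>(x,y)\<in>{(x,y). x @ y = w}. a x * b y)"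
proof -
  have inj: "inj_on (\<lambda>i. (take i w, drop i w)) {..length w}"
    unfolding inj_on_def by (metis atMost_iff length_take min.absorb2 prod.inject)
  have img: "(\<lambda>i. (take i w, drop i w)) ` {..length w} = {(x,y). x @ y = w}"
  proof
    show "{(x,y). x @ y = w} \<subseteq> (\<lambda>i. (take i w, drop i w)) ` {..length w}"
    proof
      fix p assume "p \<in> {(x,y). x @ y = w}"
      then obtain x y where "p = (x,y)" "x @ y = w" by auto
      then show "p \<in> (\<lambda>i. (take i w, drop i w)) ` {..length w}"
        by (intro image_eqI[where x="length x"]) auto
    qed
  qed auto
  show ?thesis unfolding fmul_def
    by (subst img[symmetric], subst sum.reindex[OF inj]) (simp add: o_def)
qed


lemma finite_splits: "finite {(x,y). x @ y = w}"
proof -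
  have "{(x,y). x @ y = w} \<subseteq> (\<lambda>i. (take i w, drop i w)) ` {..length w}"
  proof
    fix p assume "p \<in> {(x,y). x @ y = w}"
    then obtain x y where "p = (x,y)" "x @ y = w" by auto
    then show "p \<in> (\<lambda>i. (take i w, drop i w)) ` {..length w}"
      by (intro image_eqI[where x="length x"]) auto
  qed
  then show ?thesis by (rule finite_subset) auto
qed

lemma fmul_assoc: "fmul (fmul a b) c = fmul a (fmul b c)"
proof
  fix w :: "gen list"
  let ?T = "{(x,y,z). x @ y @ z = w}"
  have fT: "finite ?T"
  proof -
    have "?T \<subseteq> (\<lambda>((x,q),(y,z)). (x,y,z)) ` (SIGMA p:{(x,q). x @ q = w}. {(y,z). y @ z = snd p})"
      by (auto simp: image_iff)
    then show ?thesis
      by (rule finite_subset) (auto intro!: finite_SigmaI finite_splits)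
  qed
  have "fmul (fmul a b) c w = (\<Sum>(p,z)\<in>{(p,z). p @ z = w}. \<Sum>(x,y)\<in>{(x,y). x @ y = p}. a x * b y * c z)"
    unfolding fmul_splits[of _ c] fmul_splits[of a b]
    by (rule sum.cong) (auto simp: sum_distrib_right case_prod_beta)
  also have "\<dots> = (\<Sum>((p,z),(x,y))\<in>(SIGMA q:{(p,z). p @ z = w}. {(x,y). x @ y = fst q}). a x * b y * c z)"
    by (subst sum.Sigma[symmetric]) (auto intro!: finite_splits sum.cong)
  also have "\<dots> = (\<Sum>(x,y,z)\<in>?T. a x * b y * c z)"
    by (rule sum.reindex_bij_witness[where i="\<lambda>(x,y,z). ((x@y,z),(x,y))" and j="\<lambda>((p,z),(x,y)). (x,y,z)"]) auto
  finally have L: "fmul (fmul a b) c w = (\<Sum>(x,y,z)\<in>?T. a x * b y * c z)" .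
  have "fmul a (fmul b c) w = (\<Sum>(x,q)\<in>{(x,q). x @ q = w}. \<Sum>(y,z)\<in>{(y,z). y @ z = q}. a x * b y * c z)"
    unfolding fmul_splits[of a] fmul_splits[of b c]
    by (rule sum.cong) (auto simp: sum_distrib_left mult.assoc case_prod_beta)
  also have "\<dots> = (\<Sum>((x,q),(y,z))\<in>(SIGMA p:{(x,q). x @ q = w}. {(y,z). y @ z = snd p}). a x * b y * c z)"
    by (subst sum.Sigma[symmetric]) (auto intro!: finite_splits sum.cong)
  also have "\<dots> = (\<Sum>(x,y,z)\<in>?T. a x * b y * c z)"
    by (rule sum.reindex_bij_witness[where i="\<lambda>(x,y,z). ((x,y@z),(y,z))" and j="\<lambda>((x,q),(y,z)). (x,y,z)"]) auto
  finally show "fmul (fmul a b) c w = fmul a (fmul b c) w" using L by simp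
qed

lemma fmul_add_left: "fmul (a + b) c = fmul a c + fmul b c"
  by (auto simp: fmul_def sum.distrib distrib_right)
lemma fmul_add_right: "fmul a (b + c) = fmul a b + fmul a c"
  by (auto simp: fmul_def sum.distrib distrib_left)
lemma fmul_diff_left: "fmul (a - b) c = fmul a c - fmul b c"
  by (auto simp: fmul_def sum_subtractf left_diff_distrib)
lemma fmul_diff_right: "fmul a (b - c) = fmul a b - fmul a c"
  by (auto simp: fmul_def sum_subtractf right_diff_distrib)
lemma fmul_scale_left: "fmul (fscale k a) c = fscale k (fmul a c)"
  by (auto simp: fmul_def fscale_def sum_distrib_left mult.assoc)
lemma fmul_scale_right: "fmul a (fscale k c) = fscale k (fmul a c)"
  by (auto simp: fmul_def fscale_def sum_distrib_left mult.assoc mult.left_commute)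
lemma fmul_zero_left[simp]: "fmul 0 c = 0"
  by (auto simp: fmul_def)
lemma fmul_zero_right[simp]: "fmul a 0 = 0"
  by (auto simp: fmul_def)
lemma fmul_zero_left'[simp]: "fmul (\<lambda>_. 0) c = (\<lambda>_. 0)"
  by (auto simp: fmul_def)
lemma fmul_zero_right'[simp]: "fmul a (\<lambda>_. 0) = (\<lambda>_. 0)"
  by (auto simp: fmul_def)
lemma fmul_sum_left: "fmul (\<Sum>i\<in>I. f i) c = (\<Sum>i\<in>I. fmul (f i) c)"
proof (induct I rule: infinite_finite_induct)
  case (insert x F) then show ?case by (simp only: sum.insert[OF insert(1,2)] fmul_add_left insert(3))
qed simp_all
lemma fmul_sum_right: "fmul c (\<Sum>i\<in>I. f i) = (\<Sum>i\<in>I. fmul c (f i))"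
proof (induct I rule: infinite_finite_induct)
  case (insert x F) then show ?case by (simp only: sum.insert[OF insert(1,2)] fmul_add_right insert(3))
qed simp_all

lemma fmul_single: "fmul (fsingle x) (fsingle y) = fsingle (x @ y)"
proof
  fix w
  have "fmul (fsingle x) (fsingle y) w = (\<Sum>p\<in>{(x',y'). x' @ y' = w}. if p = (x,y) then 1 else 0)"
    unfolding fmul_splits by (rule sum.cong) (auto simp: fsingle_def split: if_splits)
  also have "\<dots> = (if (x,y) \<in> {(x',y'). x' @ y' = w} then 1 else 0)"
    by (rule sum.delta[OF finite_splits])
  also have "\<dots> = fsingle (x @ y) w"
    by (auto simp: fsingle_def)
  finally show "fmul (fsingle x) (fsingle y) w = fsingle (x @ y) w" .
qed

lemma fmul_fone_left[simp]: "fmul fone a = a"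
proof
  fix w show "fmul fone a w = a w"
    unfolding fmul_def fone_def fsingle_def
    by (subst sum.remove[of _ 0]) auto
qed

lemma fmul_fone_right[simp]: "fmul a fone = a"
proof
  fix w show "fmul a fone w = a w"
    unfolding fmul_def fone_def fsingle_def
    by (subst sum.remove[of _ "length w"]) auto
qed

lemma fscale_add: "fscale c (a + b) = fscale c a + fscale c b"
  by (auto simp: fscale_def distrib_left)
lemma fscale_fscale: "fscale c (fscale d a) = fscale (c*d) a"
  by (auto simp: fscale_def)


lemma FA_zero[simp]: "0 \<in> FA" by (simp add: FA_def)
lemma FA_zero'[simp]: "(\<lambda>_. 0) \<in> FA" by (simp add: FA_def)
lemma FA_add[intro]: "a \<in> FA \<Longrightarrow> b \<in> FA \<Longrightarrow> a + b \<in> FA"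
proof -
  assume "a \<in> FA" "b \<in> FA"
  then have "finite ({w. a w \<noteq> 0} \<union> {w. b w \<noteq> 0})" by (simp add: FA_def)
  moreover have "{w. (a + b) w \<noteq> 0} \<subseteq> {w. a w \<noteq> 0} \<union> {w. b w \<noteq> 0}" by auto
  ultimately show ?thesis unfolding FA_def using finite_subset by blast
qed
lemma FA_uminus[intro]: "a \<in> FA \<Longrightarrow> - a \<in> FA"
  unfolding FA_def by simp
lemma FA_diff[intro]: "a \<in> FA \<Longrightarrow> b \<in> FA \<Longrightarrow> a - b \<in> FA"
  using FA_add[of a "-b"] by auto
lemma FA_scale[intro]: "a \<in> FA \<Longrightarrow> fscale c a \<in> FA"
proof -
  assume "a \<in> FA"
  moreover have "{w. fscale c a w \<noteq> 0} \<subseteq> {w. a w \<noteq> 0}" by (auto simp: fscale_def)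
  ultimately show ?thesis unfolding FA_def using finite_subset by blast
qed
lemma FA_single[intro,simp]: "fsingle w \<in> FA"
  unfolding FA_def fsingle_def by auto
lemma FA_fone[intro,simp]: "fone \<in> FA"
  unfolding fone_def by auto
lemma FA_sum[intro]: "(\<And>i. i \<in> I \<Longrightarrow> f i \<in> FA) \<Longrightarrow> sum f I \<in> FA"
  by (induct I rule: infinite_finite_induct) auto

lemma supp_fmul: "supp (fmul a b) \<subseteq> (\<lambda>(x,y). x @ y) ` (supp a \<times> supp b)"
proof
  fix w assume "w \<in> supp (fmul a b)"
  then have ne: "(\<Sum>(x,y)\<in>{(x,y). x @ y = w}. a x * b y) \<noteq> 0" unfolding supp_def fmul_splits by simp
  have "\<exists>p\<in>{(x,y). x @ y = w}. (case p of (x,y) \<Rightarrow> a x * b y) \<noteq> 0"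
  proof (rule ccontr)
    assume "\<not> ?thesis"
    then have "(\<Sum>(x,y)\<in>{(x,y). x @ y = w}. a x * b y) = 0" by (intro sum.neutral) simp
    with ne show False by simp
  qed
  then obtain p where p: "p \<in> {(x,y). x @ y = w}" "(case p of (x,y) \<Rightarrow> a x * b y) \<noteq> 0" ..
  obtain x y where "p = (x,y)" by (cases p)
  with p have xy: "x @ y = w" "a x \<noteq> 0" "b y \<noteq> 0" by auto
  then have "(x,y) \<in> supp a \<times> supp b" by (simp add: supp_def)
  then show "w \<in> (\<lambda>(x,y). x @ y) ` (supp a \<times> supp b)"
    using xy(1) by force
qed

lemma FA_fmul[intro]: "a \<in> FA \<Longrightarrow> b \<in> FA \<Longrightarrow> fmul a b \<in> FA"
  unfolding FA_iff using supp_fmul by (rule finite_subset) auto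

lemma FA_induct[consumes 1, case_names zero step]:
  assumes "a \<in> FA" "P 0"
    and step: "\<And>a c w. a \<in> FA \<Longrightarrow> P a \<Longrightarrow> P (a + fscale c (fsingle w))"
  shows "P a"
proof -
  define r where "r S = (\<lambda>w. if w \<in> S then a w else 0)" for S
  have "finite S \<Longrightarrow> P (r S) \<and> r S \<in> FA" for S
  proof (induct S rule: finite_induct)
    case empty
    then show ?case using assms(2) by (simp add: r_def zero_fun_def)
  next
    case (insert x F)
    have eq: "r (insert x F) = r F + fscale (a x) (fsingle x)"
      using insert(2) by (auto simp: r_def fscale_def fsingle_def)
    from insert have h: "P (r F)" "r F \<in> FA" by auto
    have "P (r F + fscale (a x) (fsingle x))" by (rule step[OF h(2,1)])
    moreover have "r F + fscale (a x) (fsingle x) \<in> FA" using h(2) by blast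
    ultimately show ?case by (simp only: eq)
  qed
  moreover have "r (supp a) = a" by (auto simp: r_def supp_def)
  ultimately show ?thesis using assms(1) by (metis FA_iff)
qed

definition lsum :: "felem \<Rightarrow> (gen list \<Rightarrow> complex) \<Rightarrow> complex" where
  "lsum a F = (\<Sum>w\<in>supp a. a w * F w)"

lemma ev_lsum: "ev \<tau> a = lsum a \<tau>" by (simp add: ev_def lsum_def supp_def)
lemma phi_lsum: "phi Q1 Q2 a = (\<lambda>w'. lsum a (\<lambda>w. phiw Q1 Q2 w w'))"
  by (simp add: phi_def lsum_def supp_def)

lemma lsum_superset: "finite S \<Longrightarrow> supp a \<subseteq> S \<Longrightarrow> lsum a F = (\<Sum>w\<in>S. a w * F w)"
  unfolding lsum_def by (rule sum.mono_neutral_left) (auto simp: supp_def)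

lemma lsum_add: "a \<in> FA \<Longrightarrow> b \<in> FA \<Longrightarrow> lsum (a + b) F = lsum a F + lsum b F"
proof -
  assume "a \<in> FA" "b \<in> FA"
  then have f: "finite (supp a \<union> supp b)" by (simp add: FA_iff)
  have "supp (a + b) \<subseteq> supp a \<union> supp b" by (auto simp: supp_def)
  then show ?thesis
    using f by (simp add: lsum_superset[OF f] distrib_right sum.distrib)
qed

lemma lsum_diff: "a \<in> FA \<Longrightarrow> b \<in> FA \<Longrightarrow> lsum (a - b) F = lsum a F - lsum b F"
proof -
  assume "a \<in> FA" "b \<in> FA"
  then have f: "finite (supp a \<union> supp b)" by (simp add: FA_iff)
  have "supp (a - b) \<subseteq> supp a \<union> supp b" by (auto simp: supp_def)
  then show ?thesis
    using f by (simp add: lsum_superset[OF f] left_diff_distrib sum_subtractf)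
qed

lemma lsum_scale: "a \<in> FA \<Longrightarrow> lsum (fscale c a) F = c * lsum a F"
proof -
  assume "a \<in> FA"
  then have f: "finite (supp a)" by (simp add: FA_iff)
  have "supp (fscale c a) \<subseteq> supp a" by (auto simp: supp_def fscale_def)
  then show ?thesis
    using f by (simp add: lsum_superset[OF f] sum_distrib_left fscale_def mult.assoc)
qed

lemma lsum_zero[simp]: "lsum 0 F = 0" by (simp add: lsum_def supp_def)
lemma lsum_zero'[simp]: "lsum (\<lambda>_. 0) F = 0" by (simp add: lsum_def supp_def)

lemma lsum_single[simp]: "lsum (fsingle w) F = F w"
proof -
  have "lsum (fsingle w) F = (\<Sum>w'\<in>{w}. fsingle w w' * F w')"
    by (rule lsum_superset) (auto simp: supp_def fsingle_def)
  then show ?thesis by (simp add: fsingle_def)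
qed

lemma lsum_Fadd: "lsum a (\<lambda>w. F w + G w) = lsum a F + lsum a G"
  by (simp add: lsum_def distrib_left sum.distrib)
lemma lsum_Fdiff: "lsum a (\<lambda>w. F w - G w) = lsum a F - lsum a G"
  by (simp add: lsum_def right_diff_distrib sum_subtractf)
lemma lsum_Fmult: "lsum a (\<lambda>w. c * F w) = c * lsum a F"
  by (simp add: lsum_def sum_distrib_left mult.left_commute)
lemma lsum_Fmult': "lsum a (\<lambda>w. F w * c) = lsum a F * c"
  by (simp add: lsum_def sum_distrib_right mult.assoc)
lemma lsum_Fsum: "lsum a (\<lambda>w. \<Sum>i\<in>I. F i w) = (\<Sum>i\<in>I. lsum a (F i))"
  unfolding lsum_def by (simp add: sum_distrib_left sum.swap[of _ I])
lemma lsum_F0[simp]: "lsum a (\<lambda>w. 0) = 0"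
  by (simp add: lsum_def)
lemma lsum_cong: "(\<And>w. a w \<noteq> 0 \<Longrightarrow> F w = G w) \<Longrightarrow> lsum a F = lsum a G"
  unfolding lsum_def supp_def by (rule sum.cong) auto

lemma lsum_fmul:
  assumes "a \<in> FA" "b \<in> FA"
  shows "lsum (fmul a b) F = lsum a (\<lambda>x. lsum b (\<lambda>y. F (x @ y)))"
proof -
  let ?A = "supp a" and ?B = "supp b" and ?h = "\<lambda>(x::gen list,y). x @ y"
  have fA: "finite ?A" and fB: "finite ?B" using assms by (simp_all add: FA_iff)
  then have fAB: "finite (?A \<times> ?B)" by simp
  let ?S = "?h ` (?A \<times> ?B)"
  have fS: "finite ?S" using fAB by simp
  have "lsum (fmul a b) F = (\<Sum>w\<in>?S. fmul a b w * F w)"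
    by (rule lsum_superset[OF fS supp_fmul])
  also have "\<dots> = (\<Sum>w\<in>?S. \<Sum>p\<in>{p\<in>?A \<times> ?B. ?h p = w}. a (fst p) * b (snd p) * F (fst p @ snd p))"
  proof (rule sum.cong[OF refl])
    fix w assume "w \<in> ?S"
    have "fmul a b w * F w = (\<Sum>p\<in>{(x,y). x @ y = w}. a (fst p) * b (snd p) * F w)"
      unfolding fmul_splits by (simp add: sum_distrib_right case_prod_beta)
    also have "\<dots> = (\<Sum>p\<in>{p\<in>?A \<times> ?B. ?h p = w}. a (fst p) * b (snd p) * F w)"
      by (rule sum.mono_neutral_right[OF finite_splits]) (auto simp: supp_def)
    also have "\<dots> = (\<Sum>p\<in>{p\<in>?A \<times> ?B. ?h p = w}. a (fst p) * b (snd p) * F (fst p @ snd p))"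
      by (rule sum.cong) auto
    finally show "fmul a b w * F w = \<dots>" .
  qed
  also have "\<dots> = (\<Sum>p\<in>?A \<times> ?B. a (fst p) * b (snd p) * F (fst p @ snd p))"
    by (rule sum.image_gen[OF fAB, symmetric])
  also have "\<dots> = (\<Sum>x\<in>?A. \<Sum>y\<in>?B. a x * b y * F (x @ y))"
    by (simp add: sum.cartesian_product case_prod_beta)
  also have "\<dots> = lsum a (\<lambda>x. lsum b (\<lambda>y. F (x @ y)))"
    unfolding lsum_def by (simp add: sum_distrib_left mult.assoc)
  finally show ?thesis .
qed

definition zw :: "nat \<Rightarrow> gen list" where "zw n = replicate n Z"

lemma allZ_iff: "(w = replicate (length w) Z) \<longleftrightarrow> set w \<subseteq> {Z}"
proof
  assume "w = replicate (length w) Z"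
  then have "set w = set (replicate (length w) Z)" by simp
  then show "set w \<subseteq> {Z}" by auto
next
  assume "set w \<subseteq> {Z}"
  then show "w = replicate (length w) Z" by (intro replicate_length_same[symmetric]) auto
qed

lemma polyZ_alt: "polyZ p w = (if set w \<subseteq> {Z} then coeff p (length w) else 0)"
  unfolding polyZ_def using allZ_iff by simp

lemma polyZ_zw: "polyZ p (zw n) = coeff p n"
  by (simp add: polyZ_alt zw_def set_replicate_conv_if)

lemma supp_polyZ: "supp (polyZ p) \<subseteq> zw ` {..degree p}"
proof
  fix w assume "w \<in> supp (polyZ p)"
  then have "set w \<subseteq> {Z}" "coeff p (length w) \<noteq> 0" by (auto simp: supp_def polyZ_alt split: if_splits)
  then show "w \<in> zw ` {..degree p}"
    by (metis allZ_iff atMost_iff image_eqI le_degree zw_def)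
qed

lemma FA_polyZ[intro, simp]: "polyZ p \<in> FA"
  unfolding FA_iff by (rule finite_subset[OF supp_polyZ]) simp

lemma inj_zw: "inj zw" unfolding inj_def zw_def by simp

lemma lsum_polyZ: "lsum (polyZ p) F = (\<Sum>n\<le>degree p. coeff p n * F (zw n))"
proof -
  have "lsum (polyZ p) F = (\<Sum>w\<in>zw ` {..degree p}. polyZ p w * F w)"
    by (rule lsum_superset[OF _ supp_polyZ]) simp
  also have "\<dots> = (\<Sum>n\<le>degree p. coeff p n * F (zw n))"
    by (subst sum.reindex) (auto intro: inj_on_subset[OF inj_zw] simp: polyZ_zw)
  finally show ?thesis .
qed

lemma polyZ_add: "polyZ (p + q) = polyZ p + polyZ q"
  by (auto simp: polyZ_def)
lemma polyZ_diff: "polyZ (p - q) = polyZ p - polyZ q"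
  by (auto simp: polyZ_def)
lemma polyZ_smult: "polyZ (smult c p) = fscale c (polyZ p)"
  by (auto simp: polyZ_def fscale_def)
lemma polyZ_0[simp]: "polyZ 0 = 0"
  by (auto simp: polyZ_def)
lemma polyZ_1: "polyZ 1 = fone"
proof
  fix w show "polyZ 1 w = fone w"
    by (cases w) (auto simp: polyZ_alt fone_def fsingle_def)
qed
lemma polyZ_X: "polyZ [:0,1:] = fsingle [Z]"
proof
  fix w :: "gen list"
  show "polyZ [:0,1:] w = fsingle [Z] w"
  proof (cases "set w \<subseteq> {Z}")
    case True
    then have "w = replicate (length w) Z" using allZ_iff by blast
    then show ?thesis
      by (cases "length w"; cases "length w - 1") (auto simp: polyZ_alt fsingle_def coeff_pCons split: nat.splits) 
  next
    case False
    then show ?thesis by (auto simp: polyZ_alt fsingle_def)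
  qed
qed

lemma polyZ_mult: "fmul (polyZ p) (polyZ q) = polyZ (p * q)"
proof
  fix w :: "gen list"
  show "fmul (polyZ p) (polyZ q) w = polyZ (p * q) w"
  proof (cases "set w \<subseteq> {Z}")
    case True
    then have "set (take i w) \<subseteq> {Z}" "set (drop i w) \<subseteq> {Z}" for i
      by (meson order_trans set_take_subset set_drop_subset)+
    with True show ?thesis
      by (simp add: fmul_def polyZ_alt coeff_mult)
  next
    case False
    have z: "polyZ p (take i w) * polyZ q (drop i w) = 0" for i
    proof -
      have "\<not> (set (take i w) \<subseteq> {Z} \<and> set (drop i w) \<subseteq> {Z})"
      proof
        assume "set (take i w) \<subseteq> {Z} \<and> set (drop i w) \<subseteq> {Z}"
        then have "set (take i w) \<union> set (drop i w) \<subseteq> {Z}" by simp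
        then have "set (take i w @ drop i w) \<subseteq> {Z}" by (simp only: set_append)
        with False show False by simp
      qed
      then show ?thesis by (auto simp: polyZ_alt)
    qed
    have "fmul (polyZ p) (polyZ q) w = 0" unfolding fmul_def by (simp only: z sum.neutral_const)
    moreover have "polyZ (p * q) w = 0" using False by (simp add: polyZ_alt)
    ultimately show ?thesis by simp
  qed
qed


section \<open>Ideal\<close>

lemma lam_plus: "(\<lambda>a. (x::felem) a + y a) = x + y" by (rule ext) simp


lemma rels_FA: "r \<in> rels P \<Longrightarrow> r \<in> FA"
  unfolding rels_def by (auto intro!: FA_diff FA_add FA_fmul)


thm rel_ideal.induct rel_ideal.add
lemma I_FA: "x \<in> rel_ideal P \<Longrightarrow> x \<in> FA"
proof (induct rule: rel_ideal.induct)
  case (gen r a b) then show ?case using rels_FA FA_fmul by blast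
next
  case zero then show ?case by simp
next
  case (add x y) then show ?case using FA_add[of x y] by (simp add: plus_fun_def)
next
  case (scale x c) then show ?case by (simp add: FA_scale)
qed

lemma I_zero[simp]: "0 \<in> rel_ideal P"
proof -
  have "(0::felem) = (\<lambda>_. 0)" by (rule ext) simp
  then show ?thesis using rel_ideal.zero by metis
qed

lemma I_add: "x \<in> rel_ideal P \<Longrightarrow> y \<in> rel_ideal P \<Longrightarrow> x + y \<in> rel_ideal P"
  by (rule rel_ideal.add)
lemma I_scale: "x \<in> rel_ideal P \<Longrightarrow> fscale c x \<in> rel_ideal P"
  by (rule rel_ideal.scale)
lemma I_uminus: "x \<in> rel_ideal P \<Longrightarrow> - x \<in> rel_ideal P"
proof -
  assume "x \<in> rel_ideal P"
  then have "fscale (-1) x \<in> rel_ideal P" by (rule rel_ideal.scale)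
  moreover have "fscale (-1) x = - x" by (auto simp: fscale_def)
  ultimately show ?thesis by simp
qed
lemma I_diff: "x \<in> rel_ideal P \<Longrightarrow> y \<in> rel_ideal P \<Longrightarrow> x - y \<in> rel_ideal P"
proof -
  assume "x \<in> rel_ideal P" "y \<in> rel_ideal P"
  then have "x + - y \<in> rel_ideal P" using I_add I_uminus by blast
  moreover have "x + - y = x - y" by (rule ext) simp
  ultimately show ?thesis by simp
qed


lemma I_mult_left: "x \<in> rel_ideal P \<Longrightarrow> c \<in> FA \<Longrightarrow> fmul c x \<in> rel_ideal P"
proof (induct rule: rel_ideal.induct)
  case (gen r a b)
  then have "fmul (fmul (fmul c a) r) b \<in> rel_ideal P" by (intro rel_ideal.gen) auto
  then show ?case by (simp add: fmul_assoc)
next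
  case zero then show ?case by (simp add: rel_ideal.zero)
next
  case (add x y) then show ?case by (simp add: lam_plus fmul_add_right I_add)
next
  case (scale x d) then show ?case by (simp add: fmul_scale_right rel_ideal.scale)
qed

lemma I_mult_right: "x \<in> rel_ideal P \<Longrightarrow> c \<in> FA \<Longrightarrow> fmul x c \<in> rel_ideal P"
proof (induct rule: rel_ideal.induct)
  case (gen r a b)
  then have "fmul (fmul a r) (fmul b c) \<in> rel_ideal P" by (intro rel_ideal.gen) auto
  then show ?case by (simp add: fmul_assoc)
next
  case zero then show ?case by (simp add: rel_ideal.zero)
next
  case (add x y) then show ?case by (simp add: lam_plus fmul_add_left I_add)
next
  case (scale x d) then show ?case by (simp add: fmul_scale_left rel_ideal.scale)
qed

lemma I_rel: "r \<in> rels P \<Longrightarrow> r \<in> rel_ideal P"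
  using rel_ideal.gen[of r P fone fone] by simp

definition cg :: "complex poly \<Rightarrow> felem \<Rightarrow> felem \<Rightarrow> bool" where
  "cg P a b \<longleftrightarrow> a - b \<in> rel_ideal P"


lemma cg_refl[simp]: "cg P a a" by (simp add: cg_def)
lemma cg_sym: "cg P a b \<Longrightarrow> cg P b a"
proof -
  assume "cg P a b"
  then have "- (a - b) \<in> rel_ideal P" unfolding cg_def by (rule I_uminus)
  then show ?thesis by (simp add: cg_def)
qed
lemma cg_trans: "cg P a b \<Longrightarrow> cg P b c \<Longrightarrow> cg P a c"
proof -
  assume "cg P a b" "cg P b c"
  then have "(a - b) + (b - c) \<in> rel_ideal P" unfolding cg_def by (rule I_add)
  then show ?thesis by (simp add: cg_def)
qed
lemma cg_add: "cg P a b \<Longrightarrow> cg P c d \<Longrightarrow> cg P (a + c) (b + d)"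
proof -
  assume "cg P a b" "cg P c d"
  then have "(a - b) + (c - d) \<in> rel_ideal P" unfolding cg_def by (rule I_add)
  moreover have "(a - b) + (c - d) = (a + c) - (b + d)" by (simp add: algebra_simps)
  ultimately show ?thesis by (simp add: cg_def)
qed
lemma cg_diff: "cg P a b \<Longrightarrow> cg P c d \<Longrightarrow> cg P (a - c) (b - d)"
proof -
  assume "cg P a b" "cg P c d"
  then have "(a - b) - (c - d) \<in> rel_ideal P" unfolding cg_def by (rule I_diff)
  moreover have "(a - b) - (c - d) = (a - c) - (b - d)" by (simp add: algebra_simps)
  ultimately show ?thesis by (simp add: cg_def)
qed
lemma cg_scale: "cg P a b \<Longrightarrow> cg P (fscale c a) (fscale c b)"
proof -
  assume "cg P a b"
  then have "fscale c (a - b) \<in> rel_ideal P" unfolding cg_def by (rule I_scale)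
  moreover have "fscale c (a - b) = fscale c a - fscale c b" by (auto simp: fscale_def algebra_simps)
  ultimately show ?thesis by (simp add: cg_def)
qed
lemma cg_mult_left: "cg P a b \<Longrightarrow> c \<in> FA \<Longrightarrow> cg P (fmul c a) (fmul c b)"
  unfolding cg_def using I_mult_left by (simp add: fmul_diff_right[symmetric])
lemma cg_mult_right: "cg P a b \<Longrightarrow> c \<in> FA \<Longrightarrow> cg P (fmul a c) (fmul b c)"
  unfolding cg_def using I_mult_right by (simp add: fmul_diff_left[symmetric])
lemma cg_mult: "cg P a b \<Longrightarrow> cg P c d \<Longrightarrow> a \<in> FA \<Longrightarrow> d \<in> FA \<Longrightarrow> cg P (fmul a c) (fmul b d)"
  by (meson cg_mult_left cg_mult_right cg_trans)
lemma cg_I: "cg P a b \<longleftrightarrow> a - b \<in> rel_ideal P" by (simp add: cg_def)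
lemma cg_sum: "(\<And>i. i \<in> S \<Longrightarrow> cg P (f i) (g i)) \<Longrightarrow> cg P (sum f S) (sum g S)"
proof (induct S rule: infinite_finite_induct)
  case (insert x F) then show ?case by (simp add: lam_plus cg_add)
qed simp_all

lemma sum_fapply: "(\<Sum>i\<in>S. (f i :: felem)) w = (\<Sum>i\<in>S. f i w)"
  by (induct S rule: infinite_finite_induct) auto

lemma lsum_sum: "(\<And>i. i \<in> S \<Longrightarrow> f i \<in> FA) \<Longrightarrow> lsum (\<Sum>i\<in>S. f i) F = (\<Sum>i\<in>S. lsum (f i) F)"
proof (induct S rule: infinite_finite_induct)
  case (insert x S)
  then have "lsum (f x + sum f S) F = lsum (f x) F + lsum (sum f S) F"
    by (intro lsum_add) auto
  then show ?case using insert by (simp add: lam_plus)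
qed simp_all

lemma lsum_fsingle_apply: "a \<in> FA \<Longrightarrow> lsum a (\<lambda>w. fsingle w w') = a w'"
proof -
  assume "a \<in> FA"
  then have f: "finite (insert w' (supp a))" by (simp add: FA_iff)
  have "lsum a (\<lambda>w. fsingle w w') = (\<Sum>w\<in>insert w' (supp a). a w * fsingle w w')"
    by (rule lsum_superset[OF f]) auto
  also have "\<dots> = (\<Sum>w\<in>insert w' (supp a). if w = w' then a w' else 0)"
    by (rule sum.cong) (auto simp: fsingle_def)
  also have "\<dots> = a w'" using f by simp
  finally show ?thesis .
qed

lemma FA_decomp: "a \<in> FA \<Longrightarrow> a = (\<Sum>w\<in>supp a. fscale (a w) (fsingle w))"
proof
  fix w' assume "a \<in> FA"
  have "(\<Sum>w\<in>supp a. fscale (a w) (fsingle w)) w' = lsum a (\<lambda>w. fsingle w w')"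
    by (simp add: sum_fapply lsum_def fscale_def)
  then show "a w' = (\<Sum>w\<in>supp a. fscale (a w) (fsingle w)) w'"
    using lsum_fsingle_apply[OF \<open>a \<in> FA\<close>] by simp
qed

lemma phiw_Nil[simp]: "phiw Q1 Q2 [] = fone" by (simp add: phiw_def)
lemma phiw_Cons: "phiw Q1 Q2 (g # w) = fmul (phig Q1 Q2 g) (phiw Q1 Q2 w)" by (simp add: phiw_def)
lemma phiw_append: "phiw Q1 Q2 (x @ y) = fmul (phiw Q1 Q2 x) (phiw Q1 Q2 y)"
  by (induct x) (simp_all add: phiw_Cons fmul_assoc)

lemma FA_phig[intro, simp]: "phig Q1 Q2 g \<in> FA" by (cases g) auto
lemma FA_phiw[intro, simp]: "phiw Q1 Q2 w \<in> FA" by (induct w) (auto simp: phiw_Cons)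

lemma phi_sum: "a \<in> FA \<Longrightarrow> phi Q1 Q2 a = (\<Sum>w\<in>supp a. fscale (a w) (phiw Q1 Q2 w))"
  by (rule ext) (simp add: phi_lsum lsum_def sum_fapply fscale_def)

lemma FA_phi[intro, simp]: "a \<in> FA \<Longrightarrow> phi Q1 Q2 a \<in> FA"
  by (simp add: phi_sum FA_sum FA_scale)

lemma phi_single[simp]: "phi Q1 Q2 (fsingle w) = phiw Q1 Q2 w"
  by (rule ext) (simp add: phi_lsum)

lemma phi_add: "a \<in> FA \<Longrightarrow> b \<in> FA \<Longrightarrow> phi Q1 Q2 (a + b) = phi Q1 Q2 a + phi Q1 Q2 b"
  by (rule ext) (simp add: phi_lsum lsum_add)
lemma phi_diff: "a \<in> FA \<Longrightarrow> b \<in> FA \<Longrightarrow> phi Q1 Q2 (a - b) = phi Q1 Q2 a - phi Q1 Q2 b"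
  by (rule ext) (simp add: phi_lsum lsum_diff)
lemma phi_scale: "a \<in> FA \<Longrightarrow> phi Q1 Q2 (fscale c a) = fscale c (phi Q1 Q2 a)"
  by (rule ext) (simp add: phi_lsum lsum_scale, simp add: fscale_def)
lemma phi_zero[simp]: "phi Q1 Q2 0 = 0"
  by (rule ext) (simp add: phi_lsum)
lemma phi_zero'[simp]: "phi Q1 Q2 (\<lambda>_. 0) = (\<lambda>_. 0)"
  by (rule ext) (simp add: phi_lsum)

lemma phi_fmul:
  assumes "a \<in> FA" "b \<in> FA"
  shows "phi Q1 Q2 (fmul a b) = fmul (phi Q1 Q2 a) (phi Q1 Q2 b)"
proof
  fix w'
  let ?p = "phiw Q1 Q2"
  have "phi Q1 Q2 (fmul a b) w' = lsum a (\<lambda>x. lsum b (\<lambda>y. ?p (x @ y) w'))"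
    by (simp add: phi_lsum lsum_fmul[OF assms])
  also have "\<dots> = lsum a (\<lambda>x. lsum b (\<lambda>y. \<Sum>i\<le>length w'. ?p x (take i w') * ?p y (drop i w')))"
    by (simp add: phiw_append fmul_def)
  also have "\<dots> = lsum a (\<lambda>x. \<Sum>i\<le>length w'. ?p x (take i w') * lsum b (\<lambda>y. ?p y (drop i w')))"
    by (simp add: lsum_Fsum lsum_Fmult)
  also have "\<dots> = (\<Sum>i\<le>length w'. lsum a (\<lambda>x. ?p x (take i w')) * lsum b (\<lambda>y. ?p y (drop i w')))"
    by (simp add: lsum_Fsum lsum_Fmult')
  also have "\<dots> = fmul (phi Q1 Q2 a) (phi Q1 Q2 b) w'"
    by (simp add: fmul_def phi_lsum)
  finally show "phi Q1 Q2 (fmul a b) w' = fmul (phi Q1 Q2 a) (phi Q1 Q2 b) w'" .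
qed

lemma phiw_zw: "phiw Q1 Q2 (zw n) = fsingle (zw n)"
  by (induct n) (simp_all add: zw_def phiw_Cons fmul_single fone_def)

lemma phi_polyZ: "phi Q1 Q2 (polyZ p) = polyZ p"
proof
  fix w'
  have "phi Q1 Q2 (polyZ p) w' = (\<Sum>n\<le>degree p. coeff p n * fsingle (zw n) w')"
    by (simp add: phi_lsum lsum_polyZ phiw_zw)
  also have "\<dots> = lsum (polyZ p) (\<lambda>w. fsingle w w')"
    by (simp add: lsum_polyZ)
  also have "\<dots> = polyZ p w'" by (simp add: lsum_fsingle_apply)
  finally show "phi Q1 Q2 (polyZ p) w' = polyZ p w'" .
qed

lemma phi_fone[simp]: "phi Q1 Q2 fone = fone"
  by (simp add: fone_def)

section \<open>homogeneity\<close>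

definition hom :: "(gen list \<Rightarrow> int) \<Rightarrow> int \<Rightarrow> felem \<Rightarrow> bool" where
  "hom f k a \<longleftrightarrow> (\<forall>w. a w \<noteq> 0 \<longrightarrow> f w = k)"

definition cnt :: "gen \<Rightarrow> gen list \<Rightarrow> int" where "cnt g w = int (count_list w g)"
definition wt :: "gen list \<Rightarrow> int" where "wt w = cnt U w - cnt V w"

definition additive :: "(gen list \<Rightarrow> int) \<Rightarrow> bool" where
  "additive f \<longleftrightarrow> (\<forall>x y. f (x @ y) = f x + f y) \<and> (\<forall>n. f (zw n) = 0)"

lemma additive_cnt: "g \<noteq> Z \<Longrightarrow> additive (cnt g)"
  by (auto simp: additive_def cnt_def zw_def count_list_0_iff)
lemma additive_wt: "additive wt"
  by (auto simp: additive_def wt_def cnt_def zw_def count_list_0_iff)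

lemma hom_fmul:
  assumes "additive f" "hom f k a" "hom f l b"
  shows "hom f (k + l) (fmul a b)"
  unfolding hom_def
proof (intro allI impI)
  fix w assume "fmul a b w \<noteq> 0"
  then have "w \<in> supp (fmul a b)" by (simp add: supp_def)
  then obtain x y where "w = x @ y" "a x \<noteq> 0" "b y \<noteq> 0"
    using supp_fmul by (force simp: supp_def)
  then show "f w = k + l" using assms by (auto simp: hom_def additive_def)
qed

lemma hom_add: "hom f k a \<Longrightarrow> hom f k b \<Longrightarrow> hom f k (a + b)"
  unfolding hom_def
proof (intro allI impI)
  fix w assume h: "\<forall>w. a w \<noteq> 0 \<longrightarrow> f w = k" "\<forall>w. b w \<noteq> 0 \<longrightarrow> f w = k" "(a + b) w \<noteq> 0"
  then have "a w \<noteq> 0 \<or> b w \<noteq> 0" by auto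
  then show "f w = k" using h by blast
qed
lemma hom_diff: "hom f k a \<Longrightarrow> hom f k b \<Longrightarrow> hom f k (a - b)"
  unfolding hom_def
proof (intro allI impI)
  fix w assume h: "\<forall>w. a w \<noteq> 0 \<longrightarrow> f w = k" "\<forall>w. b w \<noteq> 0 \<longrightarrow> f w = k" "(a - b) w \<noteq> 0"
  then have "a w \<noteq> 0 \<or> b w \<noteq> 0" by auto
  then show "f w = k" using h by blast
qed
lemma hom_scale: "hom f k a \<Longrightarrow> hom f k (fscale c a)"
  by (auto simp: hom_def fscale_def)
lemma hom_zero[simp]: "hom f k 0"
  by (auto simp: hom_def)
lemma hom_single: "hom f (f w) (fsingle w)"
  by (auto simp: hom_def fsingle_def split: if_splits)
lemma hom_single': "f w = k \<Longrightarrow> hom f k (fsingle w)"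
  using hom_single by blast
lemma hom_polyZ: "additive f \<Longrightarrow> hom f 0 (polyZ p)"
  unfolding hom_def additive_def
  by (metis (mono_tags, lifting) allZ_iff polyZ_alt zw_def)
lemma hom_sum: "(\<And>i. i \<in> S \<Longrightarrow> hom f k (g i)) \<Longrightarrow> hom f k (\<Sum>i\<in>S. g i)"
  by (induct S rule: infinite_finite_induct) (auto simp: lam_plus hom_add)

lemma hom_phiw: "g \<noteq> Z \<Longrightarrow> hom (cnt g) (cnt g w) (phiw Q1 Q2 w)"
proof (induct w)
  case Nil then show ?case by (simp add: fone_def hom_single' cnt_def)
next
  case (Cons h w)
  have "hom (cnt g) (cnt g [h]) (phig Q1 Q2 h)"
  proof (cases h)
    case U then show ?thesis
      using hom_fmul[OF additive_cnt[OF Cons.prems] hom_polyZ[OF additive_cnt[OF Cons.prems]] hom_single]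
      by simp
  next
    case V then show ?thesis
      using hom_fmul[OF additive_cnt[OF Cons.prems] hom_polyZ[OF additive_cnt[OF Cons.prems]] hom_single]
      by simp
  next
    case Z then show ?thesis by (simp add: hom_single)
  qed
  from hom_fmul[OF additive_cnt[OF Cons.prems] this Cons(1)[OF Cons.prems]]
  show ?case using additive_cnt[OF Cons.prems]
    by (simp add: phiw_Cons additive_def) (metis append_Cons append_Nil)
qed

lemma gt_hom: "t \<noteq> 0 \<Longrightarrow> hom (cnt U) ku a \<Longrightarrow> hom (cnt V) kv a \<Longrightarrow> gt t a = fscale (t powi (kv - ku)) a"
  by (rule ext) (auto simp: gt_def fscale_def hom_def cnt_def)

lemma phi_gt:
  assumes "t \<noteq> 0" "a \<in> FA"
  shows "phi Q1 Q2 (gt t a) = gt t (phi Q1 Q2 a)"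
proof
  fix w'
  have f: "finite (supp a)" using assms by (simp add: FA_iff)
  have s: "supp (gt t a) \<subseteq> supp a" by (auto simp: supp_def gt_def)
  have "phi Q1 Q2 (gt t a) w' = (\<Sum>w\<in>supp a. gt t a w * phiw Q1 Q2 w w')"
    by (simp add: phi_lsum lsum_superset[OF f s])
  also have "\<dots> = (\<Sum>w\<in>supp a. a w * gt t (phiw Q1 Q2 w) w')"
  proof (rule sum.cong[OF refl])
    fix w
    have "gt t (phiw Q1 Q2 w) = fscale (t powi (cnt V w - cnt U w)) (phiw Q1 Q2 w)"
      by (rule gt_hom[OF assms(1) hom_phiw hom_phiw]) simp_all
    then show "gt t a w * phiw Q1 Q2 w w' = a w * gt t (phiw Q1 Q2 w) w'"
      by (simp add: fscale_def gt_def cnt_def)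
  qed
  also have "\<dots> = gt t (phi Q1 Q2 a) w'"
    by (simp add: phi_lsum lsum_def gt_def sum_distrib_left mult.left_commute)
  finally show "phi Q1 Q2 (gt t a) w' = gt t (phi Q1 Q2 a) w'" .
qed

declare FA_fmul[simp] FA_add[simp] FA_diff[simp] FA_scale[simp] FA_uminus[simp]

abbreviation "gU \<equiv> fsingle [U]"
abbreviation "gV \<equiv> fsingle [V]"
abbreviation "gZ \<equiv> fsingle [Z]"

lemma rel1: "cg P (fmul gU gZ) (fmul gZ gU - gU)"
proof -
  have "fmul gZ gU - fmul gU gZ - gU \<in> rel_ideal P" by (rule I_rel) (simp add: rels_def)
  then have "- (fmul gZ gU - fmul gU gZ - gU) \<in> rel_ideal P" by (rule I_uminus)
  moreover have "- (fmul gZ gU - fmul gU gZ - gU) = fmul gU gZ - (fmul gZ gU - gU)" by (simp add: algebra_simps)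
  ultimately show ?thesis by (simp only: cg_def)
qed

lemma rel2: "cg P (fmul gV gZ) (fmul gZ gV + gV)"
proof -
  have "fmul gZ gV - fmul gV gZ + gV \<in> rel_ideal P" by (rule I_rel) (simp add: rels_def)
  then have "- (fmul gZ gV - fmul gV gZ + gV) \<in> rel_ideal P" by (rule I_uminus)
  moreover have "- (fmul gZ gV - fmul gV gZ + gV) = fmul gV gZ - (fmul gZ gV + gV)" by (simp add: algebra_simps)
  ultimately show ?thesis by (simp only: cg_def)
qed

lemma rel3: "cg P (fmul gU gV) (polyZ (pshift P (-1/2)))"
  unfolding cg_def by (rule I_rel) (simp add: rels_def)
lemma rel4: "cg P (fmul gV gU) (polyZ (pshift P (1/2)))"
  unfolding cg_def by (rule I_rel) (simp add: rels_def)

lemma polyZ_1': "polyZ [:1:] = fone" by (simp add: polyZ_1[symmetric] one_pCons)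
lemma fscale_m1: "fscale (-1) x = - x" by (rule ext) (simp add: fscale_def)
lemma fmul_uminus_left: "fmul (- x) y = - fmul x y"
  using fmul_diff_left[of 0 x y] by simp
lemma fmul_uminus_right: "fmul x (- y) = - fmul x y"
  using fmul_diff_right[of x 0 y] by simp
lemma fscale_1[simp]: "fscale 1 x = x" by (rule ext) (simp add: fscale_def)

lemma polyZ_pCons: "polyZ (pCons c q) = fscale c fone + fmul gZ (polyZ q)"
proof -
  have "pCons c q = smult c 1 + [:0,1:] * q" by simp
  then show ?thesis by (simp only: polyZ_add polyZ_smult polyZ_1 polyZ_mult[symmetric] polyZ_X)
qed

lemma polyZ_Xm: "polyZ [:d,1:] = gZ + fscale d fone"
  using polyZ_pCons[of d "[:1:]"] by (simp add: polyZ_1' add.commute)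

lemma comm_U: "cg P (fmul gU (polyZ p)) (fmul (polyZ (pcompose p [:-1,1:])) gU)"
proof (induct p rule: pCons_induct)
  case 0 then show ?case by simp
next
  case (pCons c q)
  let ?q = "pcompose q [:-1,1:]"
  have L: "fmul gU (polyZ (pCons c q)) = fscale c gU + fmul (fmul gU gZ) (polyZ q)"
    by (simp add: polyZ_pCons fmul_add_right fmul_scale_right fmul_assoc)
  have "cg P (fmul (fmul gU gZ) (polyZ q)) (fmul (fmul gZ gU - gU) (polyZ q))"
    by (rule cg_mult_right[OF rel1]) simp
  also have "fmul (fmul gZ gU - gU) (polyZ q) = fmul gZ (fmul gU (polyZ q)) - fmul gU (polyZ q)"
    by (simp add: fmul_diff_left fmul_assoc)
  finally have "cg P (fmul (fmul gU gZ) (polyZ q)) (fmul gZ (fmul gU (polyZ q)) - fmul gU (polyZ q))" .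
  moreover have "cg P (fmul gZ (fmul gU (polyZ q)) - fmul gU (polyZ q))
                      (fmul gZ (fmul (polyZ ?q) gU) - fmul (polyZ ?q) gU)"
    by (rule cg_diff[OF cg_mult_left[OF pCons(2)] pCons(2)]) simp
  ultimately have "cg P (fmul gU (polyZ (pCons c q))) (fscale c gU + (fmul gZ (fmul (polyZ ?q) gU) - fmul (polyZ ?q) gU))"
    unfolding L by (intro cg_add cg_refl) (rule cg_trans)
  moreover have "fmul (polyZ (pcompose (pCons c q) [:-1,1:])) gU = fscale c gU + (fmul gZ (fmul (polyZ ?q) gU) - fmul (polyZ ?q) gU)"
  proof -
    have "pcompose (pCons c q) [:-1,1:] = smult c 1 + [:-1,1:] * ?q" by (simp add: pcompose_pCons)
    then have H: "polyZ (pcompose (pCons c q) [:-1,1:]) = fscale c fone + fmul (gZ + fscale (-1) fone) (polyZ ?q)"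
      by (simp only: polyZ_add polyZ_smult polyZ_1 polyZ_mult[symmetric] polyZ_Xm)
    show ?thesis unfolding H
      by (simp add: fmul_add_left fmul_diff_left fmul_scale_left fmul_assoc fscale_m1 fmul_uminus_left algebra_simps)
  qed
  ultimately show ?case by (simp only:)
qed

lemma comm_V: "cg P (fmul gV (polyZ p)) (fmul (polyZ (pcompose p [:1,1:])) gV)"
proof (induct p rule: pCons_induct)
  case 0 then show ?case by simp
next
  case (pCons c q)
  let ?q = "pcompose q [:1,1:]"
  have L: "fmul gV (polyZ (pCons c q)) = fscale c gV + fmul (fmul gV gZ) (polyZ q)"
    by (simp add: polyZ_pCons fmul_add_right fmul_scale_right fmul_assoc)
  have "cg P (fmul (fmul gV gZ) (polyZ q)) (fmul (fmul gZ gV + gV) (polyZ q))"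
    by (rule cg_mult_right[OF rel2]) simp
  also have "fmul (fmul gZ gV + gV) (polyZ q) = fmul gZ (fmul gV (polyZ q)) + fmul gV (polyZ q)"
    by (simp add: fmul_add_left fmul_assoc)
  finally have "cg P (fmul (fmul gV gZ) (polyZ q)) (fmul gZ (fmul gV (polyZ q)) + fmul gV (polyZ q))" .
  moreover have "cg P (fmul gZ (fmul gV (polyZ q)) + fmul gV (polyZ q))
                      (fmul gZ (fmul (polyZ ?q) gV) + fmul (polyZ ?q) gV)"
    by (rule cg_add[OF cg_mult_left[OF pCons(2)] pCons(2)]) simp
  ultimately have "cg P (fmul gV (polyZ (pCons c q))) (fscale c gV + (fmul gZ (fmul (polyZ ?q) gV) + fmul (polyZ ?q) gV))"
    unfolding L by (intro cg_add cg_refl) (rule cg_trans)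
  moreover have "fmul (polyZ (pcompose (pCons c q) [:1,1:])) gV = fscale c gV + (fmul gZ (fmul (polyZ ?q) gV) + fmul (polyZ ?q) gV)"
  proof -
    have "pcompose (pCons c q) [:1,1:] = smult c 1 + [:1,1:] * ?q" by (simp add: pcompose_pCons)
    then have H: "polyZ (pcompose (pCons c q) [:1,1:]) = fscale c fone + fmul (gZ + fscale 1 fone) (polyZ ?q)"
      by (simp only: polyZ_add polyZ_smult polyZ_1 polyZ_mult[symmetric] polyZ_Xm)
    show ?thesis unfolding H
      by (simp add: fmul_add_left fmul_diff_left fmul_scale_left fmul_assoc algebra_simps)
  qed
  ultimately show ?case by (simp only:)
qed

lemma fscale_0[simp]: "fscale 0 x = 0" by (rule ext) (simp add: fscale_def)

lemma fscale_add_left: "fscale (a + b) x = fscale a x + fscale b x"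
  by (rule ext) (simp add: fscale_def algebra_simps)

definition gcoef :: "gen \<Rightarrow> complex" where
  "gcoef g = (case g of U \<Rightarrow> 1 | V \<Rightarrow> -1 | Z \<Rightarrow> 0)"

lemma wt_Cons: "wt (g # w) = wt [g] + wt w"
  by (cases g) (simp_all add: wt_def cnt_def)
lemma gcoef_wt: "of_int (wt [g]) = gcoef g"
  by (cases g) (simp_all add: wt_def cnt_def gcoef_def)

lemma wt_Cons': "(of_int (wt (g # w)) :: complex) = gcoef g + of_int (wt w)"
  by (cases g) (simp_all add: wt_def cnt_def gcoef_def)

lemma gen_comm: "cg P (fmul gZ (fsingle [g]) - fmul (fsingle [g]) gZ) (fscale (gcoef g) (fsingle [g]))"
proof (cases g)
  case U
  have "cg P (fmul gZ gU - fmul gU gZ) (fmul gZ gU - (fmul gZ gU - gU))"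
    by (rule cg_diff[OF cg_refl rel1])
  then show ?thesis using U by (simp add: gcoef_def)
next
  case V
  have "cg P (fmul gZ gV - fmul gV gZ) (fmul gZ gV - (fmul gZ gV + gV))"
    by (rule cg_diff[OF cg_refl rel2])
  then show ?thesis using V by (simp add: gcoef_def fscale_m1)
next
  case Z
  then show ?thesis by (simp add: gcoef_def)
qed

lemma wt_comm: "cg P (fmul gZ (fsingle w) - fmul (fsingle w) gZ) (fscale (of_int (wt w)) (fsingle w))"
proof (induct w)
  case Nil then show ?case by (simp add: wt_def cnt_def fone_def[symmetric])
next
  case (Cons g w)
  have e: "fsingle (g # w) = fmul (fsingle [g]) (fsingle w)" by (simp add: fmul_single)
  have A: "fmul gZ (fmul (fsingle [g]) (fsingle w)) - fmul (fmul (fsingle [g]) (fsingle w)) gZ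
        = fmul (fmul gZ (fsingle [g]) - fmul (fsingle [g]) gZ) (fsingle w) + fmul (fsingle [g]) (fmul gZ (fsingle w) - fmul (fsingle w) gZ)"
    by (simp add: fmul_diff_left fmul_diff_right fmul_assoc)
  have B: "cg P (fmul (fmul gZ (fsingle [g]) - fmul (fsingle [g]) gZ) (fsingle w) + fmul (fsingle [g]) (fmul gZ (fsingle w) - fmul (fsingle w) gZ))
     (fmul (fscale (gcoef g) (fsingle [g])) (fsingle w) + fmul (fsingle [g]) (fscale (of_int (wt w)) (fsingle w)))"
    by (rule cg_add[OF cg_mult_right[OF gen_comm] cg_mult_left[OF Cons]]) simp_all
  have C: "fmul (fscale (gcoef g) (fsingle [g])) (fsingle w) + fmul (fsingle [g]) (fscale (of_int (wt w)) (fsingle w))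
        = fscale (of_int (wt (g # w))) (fmul (fsingle [g]) (fsingle w))"
    by (simp only: fmul_scale_left fmul_scale_right wt_Cons' fscale_add_left)
  show ?case unfolding e A using B unfolding C .
qed

lemma ev_cg:
  assumes "cg P x y" "x \<in> FA" "y \<in> FA" "\<forall>z\<in>rel_ideal P. ev \<tau> z = 0"
  shows "ev \<tau> x = ev \<tau> y"
proof -
  have "ev \<tau> (x - y) = 0" using assms by (simp add: cg_def)
  then show ?thesis using assms by (simp add: ev_lsum lsum_diff)
qed

lemma gt_gZ: "gt t gZ = gZ"
  by (rule ext) (simp add: gt_def fsingle_def)

lemma tt_wt:
  assumes "twisted_trace P t \<tau>" "wt w \<noteq> 0"
  shows "\<tau> w = 0"
proof -
  have I: "\<forall>z\<in>rel_ideal P. ev \<tau> z = 0" using assms by (simp add: twisted_trace_def)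
  have "ev \<tau> (fmul (fsingle w) gZ) = ev \<tau> (fmul (gt t gZ) (fsingle w))"
    using assms unfolding twisted_trace_def by blast
  then have "ev \<tau> (fmul gZ (fsingle w) - fmul (fsingle w) gZ) = 0"
    by (simp add: gt_gZ ev_lsum lsum_diff)
  moreover have "ev \<tau> (fmul gZ (fsingle w) - fmul (fsingle w) gZ) = ev \<tau> (fscale (of_int (wt w)) (fsingle w))"
    by (rule ev_cg[OF wt_comm _ _ I]) auto
  ultimately have "of_int (wt w) * \<tau> w = 0" by (simp add: ev_lsum lsum_scale)
  then show ?thesis using assms(2) by simp
qed

lemma tt_hom:
  assumes "twisted_trace P t \<tau>" "hom wt k a" "k \<noteq> 0"
  shows "ev \<tau> a = 0"
  unfolding ev_lsum lsum_def
proof (rule sum.neutral, intro ballI)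
  fix w assume "w \<in> supp a"
  then have "wt w = k" using assms(2) by (simp add: hom_def supp_def)
  then show "a w * \<tau> w = 0" using tt_wt[OF assms(1)] assms(3) by simp
qed

section \<open>Normal forms\<close>

definition uw :: "nat \<Rightarrow> felem" where "uw n = fsingle (replicate n U)"
definition vw :: "nat \<Rightarrow> felem" where "vw n = fsingle (replicate n V)"
definition ee :: "int \<Rightarrow> felem" where "ee k = (if k \<ge> 0 then uw (nat k) else vw (nat (-k)))"

lemma uw_0[simp]: "uw 0 = fone" by (simp add: uw_def fone_def)
lemma vw_0[simp]: "vw 0 = fone" by (simp add: vw_def fone_def)
lemma uw_Suc: "uw (Suc n) = fmul gU (uw n)" by (simp add: uw_def fmul_single)
lemma vw_Suc: "vw (Suc n) = fmul gV (vw n)" by (simp add: vw_def fmul_single)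
lemma uw_Suc': "uw (Suc n) = fmul (uw n) gU" by (simp add: uw_def fmul_single replicate_append_same)
lemma vw_Suc': "vw (Suc n) = fmul (vw n) gV" by (simp add: vw_def fmul_single replicate_append_same)
lemma ee_pos: "ee (int n) = uw n" by (simp add: ee_def)
lemma ee_neg: "ee (- int n) = vw n" unfolding ee_def by (cases "n = 0") auto
lemma FA_uw[simp]: "uw n \<in> FA" by (simp add: uw_def)
lemma FA_vw[simp]: "vw n \<in> FA" by (simp add: vw_def)
lemma FA_ee[simp]: "ee k \<in> FA" by (simp add: ee_def)

lemma wt_repU: "wt (replicate n U) = int n"
  by (induct n) (simp_all add: wt_def cnt_def)
lemma wt_repV: "wt (replicate n V) = - int n"
  by (induct n) (simp_all add: wt_def cnt_def)
lemma hom_ee: "hom wt k (ee k)"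
  unfolding ee_def uw_def vw_def by (auto intro: hom_single' simp: wt_repU wt_repV)

lemma polyZ_1_mult[simp]: "fmul (polyZ 1) x = x" by (simp add: polyZ_1)

lemma U_ee: "cg P (fmul gU (ee k)) (fmul (polyZ (if k \<ge> 0 then 1 else pshift P (-1/2))) (ee (k + 1)))"
proof (cases "k \<ge> 0")
  case True
  define n where "n = nat k"
  have k: "k = int n" using True unfolding n_def by simp
  have "k + 1 = int (Suc n)" using k by simp
  then have "ee (k + 1) = uw (Suc n)" by (simp only: ee_pos)
  then have "fmul gU (ee k) = ee (k + 1)"
    unfolding k ee_pos by (simp add: uw_Suc[symmetric])
  then show ?thesis using True by simp
next
  case False
  define n where "n = nat (- k - 1)"
  have k: "k = - int (Suc n)" using False unfolding n_def by simp
  have kk: "k + 1 = - int n" using k by simp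
  have "fmul gU (ee k) = fmul (fmul gU gV) (vw n)"
    unfolding k ee_neg by (simp add: vw_Suc fmul_assoc)
  moreover have "cg P (fmul (fmul gU gV) (vw n)) (fmul (polyZ (pshift P (-1/2))) (vw n))"
    by (rule cg_mult_right[OF rel3]) simp
  ultimately show ?thesis using False unfolding kk ee_neg by simp
qed

lemma V_ee: "cg P (fmul gV (ee k)) (fmul (polyZ (if k \<le> 0 then 1 else pshift P (1/2))) (ee (k - 1)))"
proof (cases "k \<le> 0")
  case True
  define n where "n = nat (- k)"
  have k: "k = - int n" using True unfolding n_def by simp
  have "k - 1 = - int (Suc n)" using k by simp
  then have "ee (k - 1) = vw (Suc n)" by (simp only: ee_neg)
  then have "fmul gV (ee k) = ee (k - 1)"
    unfolding k ee_neg by (simp add: vw_Suc[symmetric])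
  then show ?thesis using True by simp
next
  case False
  define n where "n = nat (k - 1)"
  have k: "k = int (Suc n)" using False unfolding n_def by simp
  have kk: "k - 1 = int n" using k by simp
  have "fmul gV (ee k) = fmul (fmul gV gU) (uw n)"
    unfolding k ee_pos by (simp add: uw_Suc fmul_assoc)
  moreover have "cg P (fmul (fmul gV gU) (uw n)) (fmul (polyZ (pshift P (1/2))) (uw n))"
    by (rule cg_mult_right[OF rel4]) simp
  ultimately show ?thesis using False unfolding kk ee_pos by simp
qed

definition tm :: "complex poly \<Rightarrow> int \<Rightarrow> felem" where "tm p k = fmul (polyZ p) (ee k)"

lemma FA_tm[simp]: "tm p k \<in> FA" by (simp add: tm_def)

inductive_set NFs :: "felem set" where
  nf0: "0 \<in> NFs"
| nfs: "x \<in> NFs \<Longrightarrow> x + tm p k \<in> NFs"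

lemma lam_zero: "(\<lambda>a. 0) = (0::felem)" by (rule ext) simp

lemma NFs_FA: "x \<in> NFs \<Longrightarrow> x \<in> FA"
  by (induct rule: NFs.induct) (simp_all add: lam_plus)

lemma NFs_add: "y \<in> NFs \<Longrightarrow> x \<in> NFs \<Longrightarrow> x + y \<in> NFs"
proof (induct rule: NFs.induct)
  case nf0 then show ?case by simp
next
  case (nfs y p k)
  then have "(x + y) + tm p k \<in> NFs" by (intro NFs.nfs) (simp add: lam_plus)
  then show ?case by (simp only: add.assoc lam_plus)
qed

lemma NFs_scale: "x \<in> NFs \<Longrightarrow> fscale c x \<in> NFs"
proof (induct rule: NFs.induct)
  case nf0 then show ?case by (simp add: fscale_def NFs.nf0 lam_zero)
next
  case (nfs x p k)
  have "fscale c (x + tm p k) = fscale c x + tm (smult c p) k"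
    by (simp add: tm_def fscale_add polyZ_smult fmul_scale_left)
  then show ?case using nfs by (simp add: NFs.nfs lam_plus)
qed

lemma tm_NFs: "tm p k \<in> NFs"
  using NFs.nfs[OF NFs.nf0, of p k] by simp

lemma gen_tm: "\<exists>y\<in>NFs. cg P (fmul (fsingle [g]) (tm p k)) y"
proof (cases g)
  case Z
  have "fmul gZ (tm p k) = tm ([:0,1:] * p) k"
    by (simp add: tm_def fmul_assoc[symmetric] polyZ_X[symmetric] polyZ_mult)
  then have "cg P (fmul gZ (tm p k)) (tm ([:0,1:] * p) k)" by (simp only: cg_refl)
  then show ?thesis using Z tm_NFs by blast
next
  case U
  define q where "q = pcompose p [:-1,1:]"
  define a where "a = (if k \<ge> 0 then 1 else pshift P (-1/2))"
  have c1: "cg P (fmul gU (tm p k)) (fmul (polyZ q) (fmul gU (ee k)))"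
    using cg_mult_right[OF comm_U[of P p], of "ee k"] unfolding q_def by (simp add: tm_def fmul_assoc)
  have c2: "cg P (fmul (polyZ q) (fmul gU (ee k))) (tm (q * a) (k+1))"
    using cg_mult_left[OF U_ee[of P k, folded a_def], of "polyZ q"]
    by (simp add: tm_def fmul_assoc polyZ_mult[symmetric])
  show ?thesis using cg_trans[OF c1 c2] U tm_NFs by blast
next
  case V
  define q where "q = pcompose p [:1,1:]"
  define a where "a = (if k \<le> 0 then 1 else pshift P (1/2))"
  have c1: "cg P (fmul gV (tm p k)) (fmul (polyZ q) (fmul gV (ee k)))"
    using cg_mult_right[OF comm_V[of P p], of "ee k"] unfolding q_def by (simp add: tm_def fmul_assoc)
  have c2: "cg P (fmul (polyZ q) (fmul gV (ee k))) (tm (q * a) (k-1))"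
    using cg_mult_left[OF V_ee[of P k, folded a_def], of "polyZ q"]
    by (simp add: tm_def fmul_assoc polyZ_mult[symmetric])
  show ?thesis using cg_trans[OF c1 c2] V tm_NFs by blast
qed

lemma gen_NF: "x \<in> NFs \<Longrightarrow> \<exists>y\<in>NFs. cg P (fmul (fsingle [g]) x) y"
proof (induct rule: NFs.induct)
  case nf0
  have "cg P (fmul (fsingle [g]) 0) 0" by simp
  then show ?case using NFs.nf0 by blast
next
  case (nfs x p k)
  then obtain y where y: "y \<in> NFs" "cg P (fmul (fsingle [g]) x) y" by blast
  obtain y' where y': "y' \<in> NFs" "cg P (fmul (fsingle [g]) (tm p k)) y'" using gen_tm by blast
  have "cg P (fmul (fsingle [g]) (x + tm p k)) (y + y')"
    unfolding fmul_add_right by (rule cg_add[OF y(2) y'(2)])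
  then show ?case using NFs_add[OF y'(1) y(1)] by blast
qed

lemma word_NF: "\<exists>y\<in>NFs. cg P (fsingle w) y"
proof (induct w)
  case Nil
  have "fsingle [] = tm 1 0" by (simp add: tm_def ee_pos[of 0, simplified] fone_def)
  then have "cg P (fsingle []) (tm 1 0)" by (simp only: cg_refl)
  then show ?case using tm_NFs by blast
next
  case (Cons g w)
  then obtain y where y: "y \<in> NFs" "cg P (fsingle w) y" by blast
  obtain y' where y': "y' \<in> NFs" "cg P (fmul (fsingle [g]) y) y'" using gen_NF[OF y(1)] by blast
  have "cg P (fmul (fsingle [g]) (fsingle w)) (fmul (fsingle [g]) y)"
    by (rule cg_mult_left[OF y(2)]) simp
  then have "cg P (fsingle (g # w)) y'" using y'(2) by (simp add: fmul_single cg_trans)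
  then show ?case using y'(1) by blast
qed

lemma FA_NF: "a \<in> FA \<Longrightarrow> \<exists>y\<in>NFs. cg P a y"
proof (induct rule: FA_induct)
  case zero
  have "cg P 0 0" by simp
  then show ?case using NFs.nf0 by blast
next
  case (step a c w)
  then obtain y where y: "y \<in> NFs" "cg P a y" by blast
  obtain y' where y': "y' \<in> NFs" "cg P (fsingle w) y'" using word_NF by blast
  have "cg P (a + fscale c (fsingle w)) (y + fscale c y')"
    by (rule cg_add[OF y(2) cg_scale[OF y'(2)]])
  then show ?case using NFs_add[OF NFs_scale[OF y'(1)] y(1)] by blast
qed

lemma NFs_sum: "x \<in> NFs \<Longrightarrow> \<exists>c S. finite S \<and> x = (\<Sum>k\<in>S. tm (c k) k)"
proof (induct rule: NFs.induct)
  case nf0 then show ?case by (intro exI[of _ "\<lambda>_. 0"] exI[of _ "{}"]) simp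
next
  case (nfs x p k)
  then obtain c S where cS: "finite S" "x = (\<Sum>k\<in>S. tm (c k) k)" by blast
  have tm_add: "tm (a + b) j = tm a j + tm b j" for a b j by (simp add: tm_def polyZ_add fmul_add_left)
  show ?case
  proof (cases "k \<in> S")
    case True
    let ?c = "c(k := c k + p)"
    have "(\<Sum>j\<in>S. tm (?c j) j) = tm (?c k) k + (\<Sum>j\<in>S - {k}. tm (?c j) j)"
      using True cS(1) by (simp add: sum.remove)
    also have "(\<Sum>j\<in>S - {k}. tm (?c j) j) = (\<Sum>j\<in>S - {k}. tm (c j) j)"
      by (rule sum.cong) auto
    also have "tm (?c k) k = tm (c k) k + tm p k" by (simp add: tm_add)
    also have "(\<Sum>j\<in>S. tm (c j) j) = tm (c k) k + (\<Sum>j\<in>S - {k}. tm (c j) j)"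
      using True cS(1) by (simp add: sum.remove)
    ultimately have "(\<Sum>j\<in>S. tm (?c j) j) = x + tm p k"
      using cS(2) by (simp add: algebra_simps lam_plus)
    then show ?thesis using cS(1) by metis
  next
    case False
    let ?c = "c(k := p)"
    have "(\<Sum>j\<in>insert k S. tm (?c j) j) = tm p k + (\<Sum>j\<in>S. tm (?c j) j)"
      using False cS(1) by simp
    also have "(\<Sum>j\<in>S. tm (?c j) j) = (\<Sum>j\<in>S. tm (c j) j)"
      by (rule sum.cong) (use False in auto)
    finally have "(\<Sum>j\<in>insert k S. tm (?c j) j) = x + tm p k"
      using cS(2) by (simp add: algebra_simps lam_plus)
    then show ?thesis using cS(1) by (metis finite_insert)
  qed
qed

fun actg :: "complex poly \<Rightarrow> gen \<Rightarrow> (complex \<Rightarrow> complex) \<Rightarrow> (complex \<Rightarrow> complex)" where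
  "actg P Z h = (\<lambda>s. s * h s)"
| "actg P U h = (\<lambda>s. poly P (s - 1/2) * h (s - 1))"
| "actg P V h = (\<lambda>s. h (s + 1))"

fun actw :: "complex poly \<Rightarrow> gen list \<Rightarrow> (complex \<Rightarrow> complex) \<Rightarrow> (complex \<Rightarrow> complex)" where
  "actw P [] h = h"
| "actw P (g # w) h = actg P g (actw P w h)"

definition act :: "complex poly \<Rightarrow> felem \<Rightarrow> (complex \<Rightarrow> complex) \<Rightarrow> (complex \<Rightarrow> complex)" where
  "act P a h = (\<lambda>s. lsum a (\<lambda>w. actw P w h s))"

lemma actw_append: "actw P (x @ y) h = actw P x (actw P y h)"
  by (induct x) simp_all

lemma actg_lin: "actg P g (\<lambda>s. \<Sum>i\<in>S. c i * h i s) = (\<lambda>s. \<Sum>i\<in>S. c i * actg P g (h i) s)"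
  by (cases g) (simp_all add: sum_distrib_left mult.left_commute)

lemma actw_lin: "actw P w (\<lambda>s. \<Sum>i\<in>S. c i * h i s) = (\<lambda>s. \<Sum>i\<in>S. c i * actw P w (h i) s)"
proof (induct w)
  case Nil then show ?case by simp
next
  case (Cons g w)
  have "actw P (g # w) (\<lambda>s. \<Sum>i\<in>S. c i * h i s) = actg P g (\<lambda>s. \<Sum>i\<in>S. c i * actw P w (h i) s)"
    using Cons by simp
  also have "\<dots> = (\<lambda>s. \<Sum>i\<in>S. c i * actg P g (actw P w (h i)) s)"
    by (rule actg_lin)
  finally show ?case by simp
qed

lemma actw_zero: "actw P w (\<lambda>s. 0) = (\<lambda>s. 0)"
  using actw_lin[where S="{}" and P=P and w=w] by simp

lemma act_single[simp]: "act P (fsingle w) h = actw P w h"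
  by (simp add: act_def)

lemma act_fmul:
  assumes "a \<in> FA" "b \<in> FA"
  shows "act P (fmul a b) h = act P a (act P b h)"
proof
  fix s
  have "act P (fmul a b) h s = lsum a (\<lambda>x. lsum b (\<lambda>y. actw P x (actw P y h) s))"
    by (simp add: act_def lsum_fmul[OF assms] actw_append)
  also have "\<dots> = lsum a (\<lambda>x. actw P x (act P b h) s)"
  proof (rule lsum_cong)
    fix x
    have "actw P x (act P b h) = actw P x (\<lambda>s. \<Sum>y\<in>supp b. b y * actw P y h s)"
      by (simp add: act_def lsum_def)
    also have "\<dots> = (\<lambda>s. \<Sum>y\<in>supp b. b y * actw P x (actw P y h) s)"
      by (rule actw_lin)
    finally show "lsum b (\<lambda>y. actw P x (actw P y h) s) = actw P x (act P b h) s"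
      by (simp add: lsum_def)
  qed
  also have "\<dots> = act P a (act P b h) s" by (simp add: act_def)
  finally show "act P (fmul a b) h s = act P a (act P b h) s" .
qed

lemma act_add: "a \<in> FA \<Longrightarrow> b \<in> FA \<Longrightarrow> act P (a + b) h = (\<lambda>s. act P a h s + act P b h s)"
  by (simp add: act_def lsum_add)
lemma act_diff: "a \<in> FA \<Longrightarrow> b \<in> FA \<Longrightarrow> act P (a - b) h = (\<lambda>s. act P a h s - act P b h s)"
  by (simp add: act_def lsum_diff)
lemma act_scale: "a \<in> FA \<Longrightarrow> act P (fscale c a) h = (\<lambda>s. c * act P a h s)"
  by (simp add: act_def lsum_scale)
lemma act_zero_vec: "act P a (\<lambda>s. 0) = (\<lambda>s. 0)"
  by (simp add: act_def actw_zero)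

lemma actw_zw: "actw P (zw n) h = (\<lambda>s. s ^ n * h s)"
  by (induct n) (simp_all add: zw_def mult.assoc)

lemma act_polyZ: "act P (polyZ p) h = (\<lambda>s. poly p s * h s)"
  by (rule ext) (simp add: act_def lsum_polyZ actw_zw poly_altdef sum_distrib_right mult.assoc)

lemma act_gen: "act P (fmul (fsingle [g1]) (fsingle [g2])) h = actw P [g1, g2] h"
  by (simp add: fmul_single)

lemma pshift_poly: "poly (pshift p c) s = poly p (s + c)"
  by (simp add: pshift_def poly_pcompose add.commute)

lemma act_rel: "r \<in> rels P \<Longrightarrow> act P r h = (\<lambda>s. 0)"
proof -
  assume "r \<in> rels P"
  then have "r = fmul gZ gU - fmul gU gZ - gU \<or> r = fmul gZ gV - fmul gV gZ + gV \<or>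
     r = fmul gU gV - polyZ (pshift P (-1/2)) \<or> r = fmul gV gU - polyZ (pshift P (1/2))"
    by (simp add: rels_def)
  then show ?thesis
    by (elim disjE; hypsubst; simp add: act_add act_diff act_gen act_polyZ pshift_poly algebra_simps)
qed

lemma act_I: "x \<in> rel_ideal P \<Longrightarrow> act P x h = (\<lambda>s. 0)"
proof (induct arbitrary: h rule: rel_ideal.induct)
  case (gen r a b)
  have "act P (fmul (fmul a r) b) h = act P a (act P r (act P b h))"
    using gen rels_FA by (simp add: act_fmul)
  then show ?case using act_rel[OF gen(1)] by (simp add: act_zero_vec)
next
  case zero then show ?case by (simp add: act_def)
next
  case (add x y) then show ?case using act_add[OF I_FA I_FA] by (simp add: lam_plus)
next
  case (scale x c) then show ?case using act_scale[OF I_FA] by simp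
qed

lemma polyZ_notin: "polyZ p \<in> rel_ideal P \<Longrightarrow> p = 0"
proof -
  assume "polyZ p \<in> rel_ideal P"
  then have "act P (polyZ p) (\<lambda>_. 1) = (\<lambda>s. 0)" by (rule act_I)
  then have "\<forall>s. poly p s = 0" by (simp add: act_polyZ fun_eq_iff)
  then show "p = 0" by (simp add: poly_all_0_iff_0)
qed

lemma pc_ne0: "p \<noteq> 0 \<Longrightarrow> pcompose p [:c, 1:] \<noteq> (0 :: complex poly)"
  using pcompose_eq_0[of p "[:c,1:]"] by auto

lemma R_uv:
  assumes "P \<noteq> 0"
  shows "(\<exists>R. R \<noteq> 0 \<and> cg P (fmul (uw n) (vw n)) (polyZ R)) \<and> (\<exists>R. R \<noteq> 0 \<and> cg P (fmul (vw n) (uw n)) (polyZ R))"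
proof (induct n)
  case 0
  have "cg P (fmul (uw 0) (vw 0)) (polyZ 1)" by (simp add: polyZ_1)
  then show ?case by (metis one_neq_zero uw_0 vw_0)
next
  case (Suc n)
  from Suc obtain R1 where R1: "R1 \<noteq> 0" "cg P (fmul (uw n) (vw n)) (polyZ R1)" by blast
  from Suc obtain R2 where R2: "R2 \<noteq> 0" "cg P (fmul (vw n) (uw n)) (polyZ R2)" by blast
  define S1 where "S1 = pcompose R1 [:-1,1:] * pshift P (-1/2)"
  define S2 where "S2 = pcompose R2 [:1,1:] * pshift P (1/2)"
  have S1: "S1 \<noteq> 0" unfolding S1_def pshift_def using R1(1) assms pc_ne0 by (simp add: pc_ne0)
  have S2: "S2 \<noteq> 0" unfolding S2_def pshift_def using R2(1) assms pc_ne0 by (simp add: pc_ne0)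
  have e1: "fmul (uw (Suc n)) (vw (Suc n)) = fmul gU (fmul (fmul (uw n) (vw n)) gV)"
    by (simp add: uw_Suc vw_Suc' fmul_assoc)
  have c1: "cg P (fmul gU (fmul (fmul (uw n) (vw n)) gV)) (fmul gU (fmul (polyZ R1) gV))"
    by (rule cg_mult_left[OF cg_mult_right[OF R1(2)]]) simp_all
  have c2: "cg P (fmul gU (fmul (polyZ R1) gV)) (fmul (polyZ (pcompose R1 [:-1,1:])) (fmul gU gV))"
    using cg_mult_right[OF comm_U[of P R1], of gV] by (simp add: fmul_assoc)
  have c3: "cg P (fmul (polyZ (pcompose R1 [:-1,1:])) (fmul gU gV)) (polyZ S1)"
    using cg_mult_left[OF rel3[of P], of "polyZ (pcompose R1 [:-1,1:])"] by (simp add: S1_def polyZ_mult)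
  have A: "cg P (fmul (uw (Suc n)) (vw (Suc n))) (polyZ S1)"
    unfolding e1 using cg_trans[OF cg_trans[OF c1 c2] c3] .
  have e2: "fmul (vw (Suc n)) (uw (Suc n)) = fmul gV (fmul (fmul (vw n) (uw n)) gU)"
    by (simp add: vw_Suc uw_Suc' fmul_assoc)
  have d1: "cg P (fmul gV (fmul (fmul (vw n) (uw n)) gU)) (fmul gV (fmul (polyZ R2) gU))"
    by (rule cg_mult_left[OF cg_mult_right[OF R2(2)]]) simp_all
  have d2: "cg P (fmul gV (fmul (polyZ R2) gU)) (fmul (polyZ (pcompose R2 [:1,1:])) (fmul gV gU))"
    using cg_mult_right[OF comm_V[of P R2], of gU] by (simp add: fmul_assoc)
  have d3: "cg P (fmul (polyZ (pcompose R2 [:1,1:])) (fmul gV gU)) (polyZ S2)"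
    using cg_mult_left[OF rel4[of P], of "polyZ (pcompose R2 [:1,1:])"] by (simp add: S2_def polyZ_mult)
  have B: "cg P (fmul (vw (Suc n)) (uw (Suc n))) (polyZ S2)"
    unfolding e2 using cg_trans[OF cg_trans[OF d1 d2] d3] .
  show ?case using A B S1 S2 by blast
qed

lemma R_ee:
  assumes "P \<noteq> 0"
  shows "\<exists>R. R \<noteq> 0 \<and> cg P (fmul (ee j) (ee (-j))) (polyZ R)"
proof (cases "j \<ge> 0")
  case True
  define n where "n = nat j"
  have "j = int n" using True by (simp add: n_def)
  then have "ee j = uw n" "ee (-j) = vw n" by (simp_all add: ee_pos ee_neg)
  then show ?thesis using R_uv[OF assms, of n] by simp
next
  case False
  define n where "n = nat (-j)"
  have "j = - int n" using False by (simp add: n_def)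
  then have "ee j = vw n" "ee (-j) = uw n" by (simp_all add: ee_pos ee_neg)
  then show ?thesis using R_uv[OF assms, of n] by simp
qed

lemma phi_gU: "phiw Q1 Q2 [U] = fmul (polyZ (pshift Q1 (-1/2))) gU" by (simp add: phiw_def)
lemma phi_gV: "phiw Q1 Q2 [V] = fmul (polyZ (pshift Q2 (1/2))) gV" by (simp add: phiw_def)
lemma phi_gZ: "phiw Q1 Q2 [Z] = gZ" by (simp add: phiw_def)

lemma gZ_comm: "fmul gZ (polyZ p) = fmul (polyZ p) gZ"
  by (simp add: polyZ_X[symmetric] polyZ_mult mult.commute)

lemma pc_shift: "pcompose (pcompose (p::complex poly) [:a,1:]) [:b,1:] = pcompose p [:a + b, 1:]"
proof -
  have "pcompose [:a,1:] [:b,1:] = [:a + b, 1:]"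
    by (simp add: pcompose_pCons one_pCons)
  then show ?thesis by (simp add: pcompose_assoc[symmetric])
qed

lemma phi_rel:
  assumes "r \<in> rels P2" "P1 * Q1 * Q2 = P2"
  shows "phi Q1 Q2 r \<in> rel_ideal P1"
proof -
  let ?A = "polyZ (pshift Q1 (-1/2))" and ?B = "polyZ (pshift Q2 (1/2))"
  have r1: "fmul gZ gU - fmul gU gZ - gU \<in> rel_ideal P1" by (rule I_rel) (simp add: rels_def)
  have r2: "fmul gZ gV - fmul gV gZ + gV \<in> rel_ideal P1" by (rule I_rel) (simp add: rels_def)
  from assms(1) have "r = fmul gZ gU - fmul gU gZ - gU \<or> r = fmul gZ gV - fmul gV gZ + gV \<or>
     r = fmul gU gV - polyZ (pshift P2 (-1/2)) \<or> r = fmul gV gU - polyZ (pshift P2 (1/2))"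
    by (simp add: rels_def)
  then show ?thesis
  proof (elim disjE)
    assume r: "r = fmul gZ gU - fmul gU gZ - gU"
    have "phi Q1 Q2 r = fmul gZ (fmul ?A gU) - fmul (fmul ?A gU) gZ - fmul ?A gU"
      unfolding r by (simp add: phi_diff phi_fmul phi_gU phi_gZ)
    also have "\<dots> = fmul ?A (fmul gZ gU - fmul gU gZ - gU)"
      by (simp add: fmul_diff_right fmul_assoc[symmetric] gZ_comm)
    finally show ?thesis using I_mult_left[OF r1, of ?A] by simp
  next
    assume r: "r = fmul gZ gV - fmul gV gZ + gV"
    have "phi Q1 Q2 r = fmul gZ (fmul ?B gV) - fmul (fmul ?B gV) gZ + fmul ?B gV"
      unfolding r by (simp add: phi_diff phi_add phi_fmul phi_gV phi_gZ)
    also have "\<dots> = fmul ?B (fmul gZ gV - fmul gV gZ + gV)"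
      by (simp add: fmul_diff_right fmul_add_right fmul_assoc[symmetric] gZ_comm)
    finally show ?thesis using I_mult_left[OF r2, of ?B] by simp
  next
    assume r: "r = fmul gU gV - polyZ (pshift P2 (-1/2))"
    let ?B' = "pcompose (pshift Q2 (1/2)) [:-1,1:]"
    have e: "phi Q1 Q2 r = fmul ?A (fmul (fmul gU ?B) gV) - polyZ (pshift P2 (-1/2))"
      unfolding r by (simp add: phi_diff phi_fmul phi_gU phi_gV phi_polyZ fmul_assoc)
    have c1: "cg P1 (fmul ?A (fmul (fmul gU ?B) gV)) (fmul ?A (fmul (polyZ ?B') (fmul gU gV)))"
      using cg_mult_left[OF cg_mult_right[OF comm_U[of P1 "pshift Q2 (1/2)"], of gV], of ?A]
      by (simp add: fmul_assoc)
    have c2: "cg P1 (fmul ?A (fmul (polyZ ?B') (fmul gU gV))) (fmul ?A (fmul (polyZ ?B') (polyZ (pshift P1 (-1/2)))))"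
      by (rule cg_mult_left[OF cg_mult_left[OF rel3]]) simp_all
    have "pshift Q1 (-1/2) * (?B' * pshift P1 (-1/2)) = pshift P2 (-1/2)"
      unfolding assms(2)[symmetric] pshift_def pc_shift by (simp add: pcompose_mult algebra_simps)
    then have c3: "fmul ?A (fmul (polyZ ?B') (polyZ (pshift P1 (-1/2)))) = polyZ (pshift P2 (-1/2))"
      by (simp add: polyZ_mult)
    show ?thesis using cg_trans[OF c1 c2] unfolding c3 e cg_def .
  next
    assume r: "r = fmul gV gU - polyZ (pshift P2 (1/2))"
    let ?A' = "pcompose (pshift Q1 (-1/2)) [:1,1:]"
    have e: "phi Q1 Q2 r = fmul ?B (fmul (fmul gV ?A) gU) - polyZ (pshift P2 (1/2))"
      unfolding r by (simp add: phi_diff phi_fmul phi_gU phi_gV phi_polyZ fmul_assoc)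
    have c1: "cg P1 (fmul ?B (fmul (fmul gV ?A) gU)) (fmul ?B (fmul (polyZ ?A') (fmul gV gU)))"
      using cg_mult_left[OF cg_mult_right[OF comm_V[of P1 "pshift Q1 (-1/2)"], of gU], of ?B]
      by (simp add: fmul_assoc)
    have c2: "cg P1 (fmul ?B (fmul (polyZ ?A') (fmul gV gU))) (fmul ?B (fmul (polyZ ?A') (polyZ (pshift P1 (1/2)))))"
      by (rule cg_mult_left[OF cg_mult_left[OF rel4]]) simp_all
    have "pshift Q2 (1/2) * (?A' * pshift P1 (1/2)) = pshift P2 (1/2)"
      unfolding assms(2)[symmetric] pshift_def pc_shift by (simp add: pcompose_mult algebra_simps)
    then have c3: "fmul ?B (fmul (polyZ ?A') (polyZ (pshift P1 (1/2)))) = polyZ (pshift P2 (1/2))"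
      by (simp add: polyZ_mult)
    show ?thesis using cg_trans[OF c1 c2] unfolding c3 e cg_def .
  qed
qed

lemma phi_I:
  assumes "x \<in> rel_ideal P2" "P1 * Q1 * Q2 = P2"
  shows "phi Q1 Q2 x \<in> rel_ideal P1"
  using assms(1)
proof (induct rule: rel_ideal.induct)
  case (gen r a b)
  have "phi Q1 Q2 (fmul (fmul a r) b) = fmul (fmul (phi Q1 Q2 a) (phi Q1 Q2 r)) (phi Q1 Q2 b)"
    using gen rels_FA by (simp add: phi_fmul)
  then show ?case using phi_rel[OF gen(1) assms(2)] gen(2,3)
    by (simp add: I_mult_left I_mult_right)
next
  case zero then show ?case by (simp add: rel_ideal.zero)
next
  case (add x y)
  then show ?case using phi_add[OF I_FA I_FA, of x P2 y P2 Q1 Q2] by (simp add: lam_plus I_add)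
next
  case (scale x c)
  then show ?case using phi_scale[OF I_FA, of x P2 Q1 Q2 c] by (simp add: I_scale)
qed

lemma FA_gt[simp]: "a \<in> FA \<Longrightarrow> gt t a \<in> FA"
proof -
  assume "a \<in> FA"
  moreover have "supp (gt t a) \<subseteq> supp a" by (auto simp: supp_def gt_def)
  ultimately show ?thesis unfolding FA_iff using finite_subset by blast
qed

lemma ev_pull: "x \<in> FA \<Longrightarrow> ev (pull Q1 Q2 \<tau>) x = ev \<tau> (phi Q1 Q2 x)"
proof -
  assume x: "x \<in> FA"
  have "ev \<tau> (phi Q1 Q2 x) = lsum (\<Sum>w\<in>supp x. fscale (x w) (phiw Q1 Q2 w)) \<tau>"
    by (simp add: ev_lsum phi_sum[OF x])
  also have "\<dots> = (\<Sum>w\<in>supp x. x w * lsum (phiw Q1 Q2 w) \<tau>)"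
    by (simp add: lsum_sum lsum_scale)
  also have "\<dots> = ev (pull Q1 Q2 \<tau>) x"
    by (simp add: ev_lsum lsum_def pull_def)
  finally show ?thesis by simp
qed

lemma tt_pull:
  assumes "twisted_trace P1 t \<tau>" "P1 * Q1 * Q2 = P2" "t \<noteq> 0"
  shows "twisted_trace P2 t (pull Q1 Q2 \<tau>)"
  unfolding twisted_trace_def
proof (intro conjI ballI)
  fix x assume "x \<in> rel_ideal P2"
  then have "x \<in> FA" "phi Q1 Q2 x \<in> rel_ideal P1" using I_FA phi_I[OF _ assms(2)] by auto
  then show "ev (pull Q1 Q2 \<tau>) x = 0" using assms(1) by (simp add: ev_pull twisted_trace_def)
next
  fix a b assume ab: "a \<in> FA" "b \<in> FA"
  have "ev (pull Q1 Q2 \<tau>) (fmul a b) = ev \<tau> (fmul (phi Q1 Q2 a) (phi Q1 Q2 b))"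
    using ab by (simp add: ev_pull phi_fmul)
  also have "\<dots> = ev \<tau> (fmul (gt t (phi Q1 Q2 b)) (phi Q1 Q2 a))"
    using assms(1) ab unfolding twisted_trace_def by simp
  also have "\<dots> = ev (pull Q1 Q2 \<tau>) (fmul (gt t b) a)"
    using ab assms(3) by (simp add: ev_pull phi_fmul phi_gt)
  finally show "ev (pull Q1 Q2 \<tau>) (fmul a b) = ev (pull Q1 Q2 \<tau>) (fmul (gt t b) a)" .
qed

lemma pull_zw: "pull Q1 Q2 \<tau> (zw n) = \<tau> (zw n)"
  by (simp add: pull_def phiw_zw ev_lsum)

lemma hom_tm: "hom wt k (tm p k)"
  using hom_fmul[OF additive_wt hom_polyZ[OF additive_wt] hom_ee] by (simp add: tm_def)

lemma tm_0: "tm p 0 = polyZ p"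
  using ee_pos[of 0] by (simp add: tm_def)

lemma ev_polyZ: "ev \<tau> (polyZ p) = (\<Sum>n\<le>degree p. coeff p n * \<tau> (zw n))"
  by (simp add: ev_lsum lsum_polyZ)

lemma ev_tm: "twisted_trace P t \<tau> \<Longrightarrow> ev \<tau> (tm p k) = (if k = 0 then ev \<tau> (polyZ p) else 0)"
  using tt_hom[OF _ hom_tm] by (auto simp: tm_0)

lemma tt_det:
  assumes "twisted_trace P t \<tau>" "twisted_trace P t \<tau>'" "\<forall>n. \<tau> (zw n) = \<tau>' (zw n)"
  shows "\<tau> = \<tau>'"
proof
  fix w
  have I: "\<forall>z\<in>rel_ideal P. ev \<tau> z = 0" "\<forall>z\<in>rel_ideal P. ev \<tau>' z = 0"
    using assms by (simp_all add: twisted_trace_def)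
  obtain y where y: "y \<in> NFs" "cg P (fsingle w) y" using word_NF by blast
  have "y \<in> NFs \<Longrightarrow> ev \<tau> y = ev \<tau>' y" for y
  proof (induct rule: NFs.induct)
    case nf0 then show ?case by (simp add: ev_lsum)
  next
    case (nfs x p k)
    have "ev \<tau> (x + tm p k) = ev \<tau> x + ev \<tau> (tm p k)" "ev \<tau>' (x + tm p k) = ev \<tau>' x + ev \<tau>' (tm p k)"
      using NFs_FA[OF nfs(1)] by (simp_all add: ev_lsum lsum_add)
    moreover have "ev \<tau> (tm p k) = ev \<tau>' (tm p k)"
      using assms by (simp add: ev_tm[OF assms(1)] ev_tm[OF assms(2)] ev_polyZ)
    ultimately show ?case using nfs(2) by (simp add: lam_plus)
  qed
  moreover have "\<tau> w = ev \<tau> y" "\<tau>' w = ev \<tau>' y"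
    using ev_cg[OF y(2) _ NFs_FA[OF y(1)] I(1)] ev_cg[OF y(2) _ NFs_FA[OF y(1)] I(2)]
    by (simp_all add: ev_lsum)
  ultimately show "\<tau> w = \<tau>' w" using y(1) by simp
qed

definition hank :: "(gen list \<Rightarrow> complex) \<Rightarrow> bool" where
  "hank \<tau> \<longleftrightarrow> (\<exists>p. p \<noteq> 0 \<and> (\<forall>q. ev \<tau> (polyZ (p * q)) = 0))"

lemma hank_pull: "hank (pull Q1 Q2 \<tau>) \<longleftrightarrow> hank \<tau>"
  by (simp add: hank_def ev_polyZ pull_zw)

lemma fmul_polyZ_tm: "fmul (polyZ p) (tm q k) = tm (p * q) k"
  by (simp add: tm_def fmul_assoc[symmetric] polyZ_mult)

lemma degen_of_hank:
  assumes tt: "twisted_trace P t \<tau>" and h: "hank \<tau>"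
  shows "degenerate P \<tau>"
proof -
  obtain p where p: "p \<noteq> 0" "\<forall>q. ev \<tau> (polyZ (p * q)) = 0" using h by (auto simp: hank_def)
  have I: "\<forall>z\<in>rel_ideal P. ev \<tau> z = 0" using tt by (simp add: twisted_trace_def)
  have nf: "y \<in> NFs \<Longrightarrow> ev \<tau> (fmul (polyZ p) y) = 0" for y
  proof (induct rule: NFs.induct)
    case nf0 then show ?case by (simp add: ev_lsum)
  next
    case (nfs x q k)
    have "ev \<tau> (fmul (polyZ p) (x + tm q k)) = ev \<tau> (fmul (polyZ p) x) + ev \<tau> (tm (p * q) k)"
      using NFs_FA[OF nfs(1)] by (simp add: fmul_add_right fmul_polyZ_tm ev_lsum lsum_add)
    also have "\<dots> = 0" using nfs(2) p(2) by (simp add: ev_tm[OF tt])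
    finally show ?case by (simp add: lam_plus)
  qed
  have "\<forall>b\<in>FA. ev \<tau> (fmul (polyZ p) b) = 0"
  proof
    fix b assume b: "b \<in> FA"
    obtain y where y: "y \<in> NFs" "cg P b y" using FA_NF[OF b] by blast
    have "ev \<tau> (fmul (polyZ p) b) = ev \<tau> (fmul (polyZ p) y)"
      by (rule ev_cg[OF cg_mult_left[OF y(2)] _ _ I]) (use b NFs_FA[OF y(1)] in simp_all)
    then show "ev \<tau> (fmul (polyZ p) b) = 0" using nf[OF y(1)] by simp
  qed
  moreover have "polyZ p \<notin> rel_ideal P" using polyZ_notin p(1) by blast
  ultimately show ?thesis unfolding degenerate_def using FA_polyZ by blast
qed

lemma tm_zero[simp]: "tm 0 k = 0" by (simp add: tm_def)

lemma hank_of_degen: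
  assumes P: "P \<noteq> 0" and tt: "twisted_trace P t \<tau>" and d: "degenerate P \<tau>"
  shows "hank \<tau>"
proof -
  obtain a where a: "a \<in> FA" "a \<notin> rel_ideal P" "\<forall>b\<in>FA. ev \<tau> (fmul a b) = 0"
    using d by (auto simp: degenerate_def)
  have I: "\<forall>z\<in>rel_ideal P. ev \<tau> z = 0" using tt by (simp add: twisted_trace_def)
  obtain y where y: "y \<in> NFs" "cg P a y" using FA_NF[OF a(1)] by blast
  obtain c S where cS: "finite S" "y = (\<Sum>k\<in>S. tm (c k) k)" using NFs_sum[OF y(1)] by blast
  have "\<exists>j\<in>S. c j \<noteq> 0"
  proof (rule ccontr)
    assume "\<not> ?thesis"
    then have "y = 0" unfolding cS(2) by (simp add: sum.neutral)
    then show False using y(2) a(2) by (simp add: cg_def)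
  qed
  then obtain j where j: "j \<in> S" "c j \<noteq> 0" by blast
  obtain R where R: "R \<noteq> 0" "cg P (fmul (ee j) (ee (-j))) (polyZ R)" using R_ee[OF P] by blast
  have "ev \<tau> (polyZ (c j * R * q)) = 0" for q
  proof -
    define b where "b = fmul (ee (-j)) (polyZ q)"
    have b: "b \<in> FA" by (simp add: b_def)
    have hb: "hom wt (-j) b"
      using hom_fmul[OF additive_wt hom_ee hom_polyZ[OF additive_wt]] by (simp add: b_def)
    have "0 = ev \<tau> (fmul a b)" using a(3) b by simp
    also have "\<dots> = ev \<tau> (fmul y b)"
      by (rule ev_cg[OF cg_mult_right[OF y(2)] _ _ I]) (use a b NFs_FA[OF y(1)] in simp_all)
    also have "\<dots> = (\<Sum>k\<in>S. ev \<tau> (fmul (tm (c k) k) b))"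
      unfolding cS(2) fmul_sum_left ev_lsum by (rule lsum_sum) (simp add: b)
    also have "\<dots> = ev \<tau> (fmul (tm (c j) j) b) + (\<Sum>k\<in>S - {j}. ev \<tau> (fmul (tm (c k) k) b))"
      using cS(1) j(1) by (simp add: sum.remove)
    also have "(\<Sum>k\<in>S - {j}. ev \<tau> (fmul (tm (c k) k) b)) = 0"
    proof (rule sum.neutral, intro ballI)
      fix k assume "k \<in> S - {j}"
      then have "k + - j \<noteq> 0" by simp
      then show "ev \<tau> (fmul (tm (c k) k) b) = 0"
        by (rule tt_hom[OF tt hom_fmul[OF additive_wt hom_tm hb]])
    qed
    also have "ev \<tau> (fmul (tm (c j) j) b) = ev \<tau> (fmul (polyZ (c j)) (fmul (fmul (ee j) (ee (-j))) (polyZ q)))"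
      by (simp add: tm_def b_def fmul_assoc)
    also have "\<dots> = ev \<tau> (fmul (polyZ (c j)) (fmul (polyZ R) (polyZ q)))"
      by (rule ev_cg[OF cg_mult_left[OF cg_mult_right[OF R(2)]] _ _ I]) simp_all
    also have "fmul (polyZ (c j)) (fmul (polyZ R) (polyZ q)) = polyZ (c j * R * q)"
      by (simp add: polyZ_mult mult.assoc)
    finally show ?thesis by simp
  qed
  moreover have "c j * R \<noteq> 0" using j(2) R(1) by simp
  ultimately show ?thesis unfolding hank_def by blast
qed

lemma degen_iff:
  assumes "P \<noteq> 0" "twisted_trace P t \<tau>"
  shows "degenerate P \<tau> \<longleftrightarrow> hank \<tau>"
  using degen_of_hank[OF assms(2)] hank_of_degen[OF assms] by blast

theorem theorem3p8:
  fixes P1 P2 Q1 Q2 :: "complex poly" and t :: complex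
  assumes "degree P1 > 0"
    and "P1 * Q1 * Q2 = P2"
    and "degree P2 > 0"
    and "t \<noteq> 0"
  shows
    "(\<forall>a\<in>FA. phi Q1 Q2 a \<in> FA)
     \<and> phi Q1 Q2 (fsingle [U]) = fmul (polyZ (pshift Q1 (-1/2))) (fsingle [U])
     \<and> phi Q1 Q2 (fsingle [V]) = fmul (polyZ (pshift Q2 (1/2))) (fsingle [V])
     \<and> phi Q1 Q2 (fsingle [Z]) = fsingle [Z]
     \<and> phi Q1 Q2 fone = fone
     \<and> (\<forall>a\<in>FA. \<forall>b\<in>FA. phi Q1 Q2 (fmul a b) = fmul (phi Q1 Q2 a) (phi Q1 Q2 b))
     \<and> (\<forall>a\<in>FA. \<forall>b\<in>FA. \<forall>c. phi Q1 Q2 (a + fscale c b) = phi Q1 Q2 a + fscale c (phi Q1 Q2 b))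
     \<and> (\<forall>x\<in>rel_ideal P2. phi Q1 Q2 x \<in> rel_ideal P1)
     \<and> (\<forall>a\<in>FA. phi Q1 Q2 (gt t a) - gt t (phi Q1 Q2 a) \<in> rel_ideal P1)
     \<and> (\<forall>\<tau>. twisted_trace P1 t \<tau> \<longrightarrow> twisted_trace P2 t (pull Q1 Q2 \<tau>))
     \<and> (\<forall>\<tau> \<tau>' c. pull Q1 Q2 (\<lambda>w. \<tau> w + c * \<tau>' w)
                 = (\<lambda>w. pull Q1 Q2 \<tau> w + c * pull Q1 Q2 \<tau>' w))
     \<and> (\<forall>\<tau> \<tau>'. twisted_trace P1 t \<tau> \<longrightarrow> twisted_trace P1 t \<tau>' \<longrightarrow>
                pull Q1 Q2 \<tau> = pull Q1 Q2 \<tau>' \<longrightarrow> \<tau> = \<tau>')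
     \<and> (\<forall>\<tau>. twisted_trace P1 t \<tau> \<longrightarrow> stieltjes (pull Q1 Q2 \<tau>) = stieltjes \<tau>)
     \<and> (\<forall>\<tau>. twisted_trace P1 t \<tau> \<longrightarrow>
                (degenerate P2 (pull Q1 Q2 \<tau>) \<longleftrightarrow> degenerate P1 \<tau>))"
proof -
  have P1: "P1 \<noteq> 0" and P2: "P2 \<noteq> 0" using assms(1,3) by auto
  have p11: "\<forall>\<tau> \<tau>' c. pull Q1 Q2 (\<lambda>w. \<tau> w + c * \<tau>' w)
                 = (\<lambda>w. pull Q1 Q2 \<tau> w + c * pull Q1 Q2 \<tau>' w)"
    by (auto simp: pull_def ev_def sum.distrib sum_distrib_left algebra_simps)
  have p12: "\<forall>\<tau> \<tau>'. twisted_trace P1 t \<tau> \<longrightarrow> twisted_trace P1 t \<tau>' \<longrightarrow>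
                pull Q1 Q2 \<tau> = pull Q1 Q2 \<tau>' \<longrightarrow> \<tau> = \<tau>'"
  proof (intro allI impI)
    fix \<tau> \<tau>' assume h: "twisted_trace P1 t \<tau>" "twisted_trace P1 t \<tau>'" "pull Q1 Q2 \<tau> = pull Q1 Q2 \<tau>'"
    have "\<forall>n. \<tau> (zw n) = \<tau>' (zw n)"
      using h(3) pull_zw[of Q1 Q2 \<tau>] pull_zw[of Q1 Q2 \<tau>'] by metis
    then show "\<tau> = \<tau>'" by (rule tt_det[OF h(1,2)])
  qed
  have p13: "\<forall>\<tau>. twisted_trace P1 t \<tau> \<longrightarrow> stieltjes (pull Q1 Q2 \<tau>) = stieltjes \<tau>"
    using pull_zw by (simp add: stieltjes_def zw_def)
  have p14: "\<forall>\<tau>. twisted_trace P1 t \<tau> \<longrightarrow>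
                (degenerate P2 (pull Q1 Q2 \<tau>) \<longleftrightarrow> degenerate P1 \<tau>)"
  proof (intro allI impI)
    fix \<tau> assume h: "twisted_trace P1 t \<tau>"
    have "twisted_trace P2 t (pull Q1 Q2 \<tau>)" by (rule tt_pull[OF h assms(2,4)])
    then show "degenerate P2 (pull Q1 Q2 \<tau>) \<longleftrightarrow> degenerate P1 \<tau>"
      using degen_iff[OF P2] degen_iff[OF P1 h] hank_pull by metis
  qed
  have p9: "\<forall>a\<in>FA. phi Q1 Q2 (gt t a) - gt t (phi Q1 Q2 a) \<in> rel_ideal P1"
    using phi_gt[OF assms(4)] by simp
  have p7: "\<forall>a\<in>FA. \<forall>b\<in>FA. \<forall>c. phi Q1 Q2 (a + fscale c b) = phi Q1 Q2 a + fscale c (phi Q1 Q2 b)"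
    by (simp add: phi_add phi_scale)
  show ?thesis
    using p7 p9 p11 p12 p13 p14 tt_pull[OF _ assms(2,4)] phi_I[OF _ assms(2)]
    by (simp add: phi_gU phi_gV phi_gZ phi_fmul)
qed

end
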